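(* Let $(G,v_G)$ be a rooted graph and let $g,h\ge 0$, $m\ge 2$ be integers. Let $K_m^{gh}(G,K_1)$ be the graph obtained from the disjoint union of $G$ and a complete graph $K_m$ with two distinct chosen vertices $x,y$ by adding a path of length $g$ joining $v_G$ and $x$ (identifying them if $g=0$) and attaching a pendant path of length $h$ at $y$. Then \[ \frac{X_{K_m^{gh}(G,K_1)}}{(m-2)!}=\sum_{z=1}^{m-1}z\,e_{m-1-z}\,X_{G^{g+h+z}}-(m-2)\sum_{z=1}^{m-1}\frac{X_{K_z^h}}{(z-1)!}\,X_{G^{m-1-z+g}}. \]
   Context: All graphs are finite simple graphs. The chromatic symmetric function of a graph $G$ is $X_G=\sum_{\kappa}\prod_{v\in V(G)}x_{\kappa(v)}$, where $\kappa$ ranges over proper colorings $\kappa:V(G)\to\{1,2,\dots\}$; $e_a$ is the $a$-th elementary symmetric function, $e_0=1$. For a rooted graph $G$ and $k\ge 0$, the tailed graph $G^k$ is $G$ with a pendant path of length $k$ (with $k$ new vertices) attached at its root. $K_z^h$ is the lollipop: the complete graph $K_z$ with a pendant path of length $h$ attached at one vertex. *)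

theory Defs
  imports Complex_Main "HOL-Library.FuncSet" "HOL-Library.Poly_Mapping"
begin

text \<open>Symmetric functions (in the variables x_1, x_2, ...) are represented by their
  coefficient functions: a monomial is an exponent vector finitely supported nat to nat map, where
  index i stands for the variable x_i (index 0 is never used).\<close>

type_synonym 'v graph = "'v set \<times> ('v \<Rightarrow> 'v \<Rightarrow> bool)"
type_synonym sf = "(nat \<Rightarrow>\<^sub>0 nat) \<Rightarrow> rat"

definition proper_coloring :: "'v graph \<Rightarrow> ('v \<Rightarrow> nat) \<Rightarrow> bool" where
  "proper_coloring G \<kappa> \<longleftrightarrow>
     \<kappa> \<in> fst G \<rightarrow>\<^sub>E {1..} \<and> (\<forall>u\<in>fst G. \<forall>v\<in>fst G. snd G u v \<longrightarrow> \<kappa> u \<noteq> \<kappa> v)"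

definition csf :: "'v graph \<Rightarrow> sf" where
  "csf G \<alpha> = of_nat (card {\<kappa>. proper_coloring G \<kappa> \<and>
                          (\<forall>i. card {v\<in>fst G. \<kappa> v = i} = Poly_Mapping.lookup \<alpha> i)})"

definition elem_sf :: "nat \<Rightarrow> sf" where
  "elem_sf a \<alpha> = (if Poly_Mapping.lookup \<alpha> 0 = 0 \<and> (\<forall>i. Poly_Mapping.lookup \<alpha> i \<le> 1) \<and> sum (Poly_Mapping.lookup \<alpha>) (Poly_Mapping.keys \<alpha>) = a
                   then 1 else 0)"

definition sf_mult :: "sf \<Rightarrow> sf \<Rightarrow> sf" where
  "sf_mult f g \<alpha> = (\<Sum>(\<beta>,\<gamma>)\<in>{(\<beta>,\<gamma>). \<beta> + \<gamma> = \<alpha>}. f \<beta> * g \<gamma>)"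

definition mk_graph :: "'v set \<Rightarrow> ('v \<times> 'v) set \<Rightarrow> 'v graph" where
  "mk_graph V S = (V, \<lambda>u v. (u, v) \<in> S \<or> (v, u) \<in> S)"

text \<open>Tailed graph G^k for a rooted graph (G, r): new vertices Inr 1, ..., Inr k,
  path Inl r -- Inr 1 -- ... -- Inr k.\<close>
definition tail_vertex :: "'a \<Rightarrow> nat \<Rightarrow> 'a + nat" where
  "tail_vertex r i = (if i = 0 then Inl r else Inr i)"

definition tailed :: "'a graph \<Rightarrow> 'a \<Rightarrow> nat \<Rightarrow> ('a + nat) graph" where
  "tailed G r k = mk_graph (Inl ` fst G \<union> Inr ` {1..k})
     ({(Inl u, Inl v) | u v. u \<in> fst G \<and> v \<in> fst G \<and> snd G u v} \<union>
      {(tail_vertex r i, tail_vertex r (i+1)) | i. i < k})"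

text \<open>Lollipop K_z^h: clique on {0..<z}, pendant path z-1 -- z -- ... -- z+h-1.\<close>
definition lollipop :: "nat \<Rightarrow> nat \<Rightarrow> nat graph" where
  "lollipop z h = mk_graph {0..<z+h}
     ({(i, j) | i j. i < j \<and> j < z} \<union> {(z - 1 + i, z + i) | i. i < h})"

text \<open>Clique vertices: x and Inr (1,j) for 1 \<le> j < m, with y = Inr (1,1);
  internal path vertices Inr (0,i), 0 < i < g; tail vertices Inr (2,i), 1 \<le> i \<le> h.\<close>
definition Kgh_x :: "'a \<Rightarrow> nat \<Rightarrow> 'a + nat \<times> nat" where
  "Kgh_x r g = (if g = 0 then Inl r else Inr (1, 0))"

definition Kgh_path :: "'a \<Rightarrow> nat \<Rightarrow> nat \<Rightarrow> 'a + nat \<times> nat" where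
  "Kgh_path r g i = (if i = 0 then Inl r else if i = g then Kgh_x r g else Inr (0, i))"

definition Kgh_tail :: "nat \<Rightarrow> 'a + nat \<times> nat" where
  "Kgh_tail i = Inr (2, i)"

definition Kgh_clique :: "'a \<Rightarrow> nat \<Rightarrow> nat \<Rightarrow> ('a + nat \<times> nat) set" where
  "Kgh_clique r g m = insert (Kgh_x r g) {Inr (1, j) | j. 1 \<le> j \<and> j < m}"

definition Kgh :: "'a graph \<Rightarrow> 'a \<Rightarrow> nat \<Rightarrow> nat \<Rightarrow> nat \<Rightarrow> ('a + nat \<times> nat) graph" where
  "Kgh G r m g h = mk_graph
     (Inl ` fst G \<union> Kgh_path r g ` {0..g} \<union> Kgh_clique r g m \<union> Kgh_tail ` {1..h})
     ({(Inl u, Inl v) | u v. u \<in> fst G \<and> v \<in> fst G \<and> snd G u v} \<union>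
      {(Kgh_path r g i, Kgh_path r g (i+1)) | i. i < g} \<union>
      {(u, v) | u v. u \<in> Kgh_clique r g m \<and> v \<in> Kgh_clique r g m \<and> u \<noteq> v} \<union>
      {(Inr (1, 1), Kgh_tail 1) | _::unit. 0 < h} \<union>
      {(Kgh_tail i, Kgh_tail (i+1)) | i. 1 \<le> i \<and> i < h})"

end

theory Submission
  imports Defs "HOL-Computational_Algebra.Formal_Power_Series"
begin

unbundle fps_syntax


type_synonym pl = "(nat \<Rightarrow>\<^sub>0 nat) \<Rightarrow>\<^sub>0 rat"
definition xv :: "nat \<Rightarrow> pl" where "xv i = Poly_Mapping.single (Poly_Mapping.single i 1) 1"

definition lf :: "nat \<Rightarrow> pl fps" where "lf c = 1 + fps_const (xv c) * fps_X"

definition EE :: "nat set \<Rightarrow> pl fps" where "EE D = (\<Prod>c\<in>D. lf c)"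

fun Wk :: "nat \<Rightarrow> nat \<Rightarrow> nat \<Rightarrow> nat \<Rightarrow> pl" where
  "Wk N 0 s q = (if s = q then 1 else 0)"
| "Wk N (Suc k) s q = xv q * (\<Sum>c\<in>{1..N}-{q}. Wk N k s c)"

definition TT :: "nat \<Rightarrow> nat \<Rightarrow> nat \<Rightarrow> pl" where
  "TT N k s = (\<Sum>q\<in>{1..N}. Wk N k s q)"

definition VV :: "nat \<Rightarrow> nat \<Rightarrow> nat \<Rightarrow> nat \<Rightarrow> pl" where
  "VV N k s q = (\<Sum>c\<in>{1..N}-{q}. Wk N k s c)"

lemma Wk_concat:
  assumes "q \<in> {1..N}"
  shows "Wk N (a + b) p q = (\<Sum>s\<in>{1..N}. Wk N a p s * Wk N b s q)"
  using assms
proof (induction b arbitrary: q)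
  case 0
  have "(\<Sum>s\<in>{1..N}. Wk N a p s * Wk N 0 s q) = (\<Sum>s\<in>{1..N}. if s = q then Wk N a p s else 0)"
    by (rule sum.cong) auto
  also have "\<dots> = Wk N a p q" using 0 by (simp add: sum.delta')
  finally show ?case by simp
next
  case (Suc b)
  have "Wk N (a + Suc b) p q = xv q * (\<Sum>c\<in>{1..N}-{q}. Wk N (a + b) p c)" by simp
  also have "\<dots> = xv q * (\<Sum>c\<in>{1..N}-{q}. \<Sum>s\<in>{1..N}. Wk N a p s * Wk N b s c)"
    using Suc.IH by (intro arg_cong[where f="\<lambda>x. xv q * x"] sum.cong) auto
  also have "\<dots> = (\<Sum>s\<in>{1..N}. Wk N a p s * (xv q * (\<Sum>c\<in>{1..N}-{q}. Wk N b s c)))"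
    by (simp add: sum_distrib_left algebra_simps) (rule sum.swap)
  finally show ?case by simp
qed

lemma TT_concat:
  "TT N (a + b) p = (\<Sum>s\<in>{1..N}. Wk N a p s * TT N b s)"
  unfolding TT_def
  by (simp add: Wk_concat sum_distrib_left) (rule sum.swap)

lemma Wk_one: "s \<in> {1..N} \<Longrightarrow> Wk N 1 s c = (if c = s then 0 else xv c)"
  by (simp add: sum.delta)

lemma TT_Suc:
  assumes "s \<in> {1..N}"
  shows "TT N (Suc j) s = (\<Sum>c\<in>{1..N}-{s}. xv c * TT N j c)"
proof -
  have "TT N (Suc j) s = TT N (1 + j) s" by simp
  also have "\<dots> = (\<Sum>c\<in>{1..N}. (if c = s then 0 else xv c) * TT N j c)"
    unfolding TT_concat using assms by (intro sum.cong) (auto simp: Wk_one)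
  also have "\<dots> = (\<Sum>c\<in>{1..N}-{s}. xv c * TT N j c)"
    by (rule sum.mono_neutral_cong_right) auto
  finally show ?thesis .
qed

lemma TT_0: "s \<in> {1..N} \<Longrightarrow> TT N 0 s = 1"
  by (simp add: TT_def sum.delta)

lemma VV_eq: "q \<in> {1..N} \<Longrightarrow> VV N k s q = TT N k s - Wk N k s q"
  unfolding VV_def TT_def by (simp add: sum_diff1)

lemma EE_insert: "finite D \<Longrightarrow> a \<notin> D \<Longrightarrow> EE (insert a D) = lf a * EE D"
  by (simp add: EE_def)

lemma EE_remove: "finite D \<Longrightarrow> a \<in> D \<Longrightarrow> EE D = lf a * EE (D - {a})"
  unfolding EE_def by (simp add: prod.remove)

lemma deriv_lf: "fps_deriv (lf c) = fps_const (xv c)"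
  by (simp add: lf_def)

lemma L1:
  assumes "finite D"
  shows "fps_X * fps_deriv (EE D) = (\<Sum>c\<in>D. fps_const (xv c) * fps_X * EE (D - {c}))"
  using assms
proof (induction D rule: finite_induct)
  case empty
  then show ?case by (simp add: EE_def)
next
  case (insert a D)
  have "fps_X * fps_deriv (EE (insert a D)) = fps_const (xv a) * fps_X * EE D + lf a * (fps_X * fps_deriv (EE D))"
    using insert by (simp add: EE_insert deriv_lf algebra_simps)
  also have "\<dots> = fps_const (xv a) * fps_X * EE D + (\<Sum>c\<in>D. fps_const (xv c) * fps_X * EE (insert a D - {c}))"
  proof -
    have "\<And>c. c \<in> D \<Longrightarrow> EE (insert a D - {c}) = lf a * EE (D - {c})"
    proof -
      fix c assume c: "c \<in> D"
      then have "insert a D - {c} = insert a (D - {c})" using insert by auto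
      then show "EE (insert a D - {c}) = lf a * EE (D - {c})"
        using insert by (simp add: EE_insert)
    qed
    then show ?thesis using insert.IH by (simp add: sum_distrib_left algebra_simps)
  qed
  also have "\<dots> = (\<Sum>c\<in>insert a D. fps_const (xv c) * fps_X * EE (insert a D - {c}))"
    using insert by (simp add: sum.insert)
  finally show ?case .
qed

definition Ff :: "nat \<Rightarrow> nat \<Rightarrow> pl fps" where "Ff N s = Abs_fps (\<lambda>j. TT N j s)"
definition VVf :: "nat \<Rightarrow> nat \<Rightarrow> nat \<Rightarrow> pl fps" where "VVf N s q = Abs_fps (\<lambda>j. VV N j s q)"
definition QQ :: "nat \<Rightarrow> pl fps" where "QQ N = EE {1..N} - fps_X * fps_deriv (EE {1..N})"

lemma Ff_front:
  assumes "s \<in> {1..N}"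
  shows "Ff N s = 1 + fps_X * (\<Sum>c\<in>{1..N}-{s}. fps_const (xv c) * Ff N c)"
proof (rule fps_ext)
  fix n show "Ff N s $ n = (1 + fps_X * (\<Sum>c\<in>{1..N}-{s}. fps_const (xv c) * Ff N c)) $ n"
    using assms by (cases n) (auto simp: Ff_def TT_0 TT_Suc fps_sum_nth)
qed

lemma key1:
  assumes "s \<in> {1..N}"
  shows "QQ N + fps_X * (\<Sum>c\<in>{1..N}-{s}. fps_const (xv c) * EE ({1..N} - {c})) = EE ({1..N} - {s})"
proof -
  let ?C = "{1..N::nat}"
  have "fps_X * (\<Sum>c\<in>?C-{s}. fps_const (xv c) * EE (?C - {c}))
      = (\<Sum>c\<in>?C-{s}. fps_const (xv c) * fps_X * EE (?C - {c}))"
    by (simp add: sum_distrib_left algebra_simps)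
  also have "\<dots> = (\<Sum>c\<in>?C. fps_const (xv c) * fps_X * EE (?C - {c})) - fps_const (xv s) * fps_X * EE (?C - {s})"
    using assms by (simp add: sum_diff1)
  also have "\<dots> = fps_X * fps_deriv (EE ?C) - fps_const (xv s) * fps_X * EE (?C - {s})"
    by (simp add: L1)
  finally have *: "fps_X * (\<Sum>c\<in>?C-{s}. fps_const (xv c) * EE (?C - {c})) = fps_X * fps_deriv (EE ?C) - fps_const (xv s) * fps_X * EE (?C - {s})" .
  have "EE ?C = lf s * EE (?C - {s})" using assms by (simp add: EE_remove)
  then show ?thesis unfolding QQ_def * by (simp add: lf_def algebra_simps)
qed

lemma R1:
  assumes "s \<in> {1..N}"
  shows "QQ N * Ff N s = EE ({1..N} - {s})"
proof -
  let ?C = "{1..N::nat}"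
  define D where "D s = QQ N * Ff N s - EE (?C - {s})" for s
  have rec: "D s = fps_X * (\<Sum>c\<in>?C-{s}. fps_const (xv c) * D c)" if "s \<in> ?C" for s
  proof -
    have "D s = QQ N * (1 + fps_X * (\<Sum>c\<in>?C-{s}. fps_const (xv c) * Ff N c)) - EE (?C - {s})"
      unfolding D_def using Ff_front[OF that] by simp
    also have "\<dots> = QQ N + fps_X * (\<Sum>c\<in>?C-{s}. fps_const (xv c) * (QQ N * Ff N c)) - EE (?C - {s})"
      by (simp add: algebra_simps sum_distrib_left)
    also have "\<dots> = QQ N + fps_X * (\<Sum>c\<in>?C-{s}. fps_const (xv c) * (D c + EE (?C - {c}))) - EE (?C - {s})"
      unfolding D_def by simp
    also have "\<dots> = (QQ N + fps_X * (\<Sum>c\<in>?C-{s}. fps_const (xv c) * EE (?C - {c}))) - EE (?C - {s})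
         + fps_X * (\<Sum>c\<in>?C-{s}. fps_const (xv c) * D c)"
      by (simp add: algebra_simps sum.distrib)
    also have "\<dots> = fps_X * (\<Sum>c\<in>?C-{s}. fps_const (xv c) * D c)"
      using key1[OF that] by simp
    finally show ?thesis .
  qed
  have "\<forall>s\<in>?C. D s $ n = 0" for n
  proof (induction n)
    case 0
    show ?case
    proof
      fix s assume s: "s \<in> ?C"
      have "D s $ 0 = (fps_X * (\<Sum>c\<in>?C-{s}. fps_const (xv c) * D c)) $ 0"
        using rec[OF s] by (rule arg_cong[where f="\<lambda>f. f $ 0"])
      then show "D s $ 0 = 0" by simp
    qed
  next
    case (Suc n)
    show ?case
    proof
      fix s assume s: "s \<in> ?C"
      have "D s $ Suc n = (fps_X * (\<Sum>c\<in>?C-{s}. fps_const (xv c) * D c)) $ Suc n"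
        using rec[OF s] by (rule arg_cong[where f="\<lambda>f. f $ Suc n"])
      also have "\<dots> = (\<Sum>c\<in>?C-{s}. xv c * D c $ n)" by (simp add: fps_sum_nth)
      also have "\<dots> = 0" using Suc.IH by (intro sum.neutral) auto
      finally show "D s $ Suc n = 0" .
    qed
  qed
  then have "D s = 0" using assms by (intro fps_ext) simp
  then show ?thesis unfolding D_def by simp
qed

lemma VVf_eq:
  assumes "s \<in> {1..N}" "q \<in> {1..N}"
  shows "lf q * VVf N s q = Ff N s - (if s = q then 1 else 0)"
proof (rule fps_ext)
  fix n
  show "(lf q * VVf N s q) $ n = (Ff N s - (if s = q then 1 else 0)) $ n"
  proof (cases n)
    case 0
    have "VV N 0 s q = (if s = q then 0 else 1)"
      using assms unfolding VV_def by (simp add: sum.delta)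
    then show ?thesis using 0 assms by (simp add: lf_def VVf_def Ff_def TT_0 algebra_simps)
  next
    case (Suc k)
    have "Wk N (Suc k) s q = xv q * VV N k s q" by (simp add: VV_def)
    then have "VV N (Suc k) s q = TT N (Suc k) s - xv q * VV N k s q"
      using VV_eq[OF assms(2), of "Suc k" s] by simp
    then show ?thesis using Suc assms by (simp add: lf_def VVf_def Ff_def algebra_simps)
  qed
qed

lemma lf_nz: "lf a \<noteq> 0"
proof
  assume "lf a = 0"
  then have "lf a $ 0 = 0" by simp
  then show False by (simp add: lf_def)
qed

lemma lf_cancel:
  assumes "lf a * A = lf a * B"
  shows "A = B"
  using assms lf_nz[of a] by simp


lemma QQ_nth: "QQ N $ k = (1 - of_nat k) * EE {1..N} $ k"
  by (cases k) (simp_all add: QQ_def algebra_simps)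

lemma EE_rem_nth:
  assumes "s \<in> {1..N}"
  shows "EE {1..N} $ Suc j = EE ({1..N} - {s}) $ Suc j + xv s * EE ({1..N} - {s}) $ j"
    and "EE {1..N} $ 0 = EE ({1..N} - {s}) $ 0"
  using EE_remove[of "{1..N}" s] assms by (simp_all add: lf_def algebra_simps)

definition ZZ :: "nat \<Rightarrow> nat \<Rightarrow> nat \<Rightarrow> nat \<Rightarrow> pl fps" where
  "ZZ N c s q = (QQ N + fps_const (of_nat c) * EE {1..N}) * VVf N s q
     - fps_const (of_nat c) * EE ({1..N} - {q}) * Ff N s"

lemma lf_ZZ:
  assumes "s \<in> {1..N}" "q \<in> {1..N}"
  shows "lf q * ZZ N c s q = EE ({1..N} - {s})
     - (if s = q then QQ N + fps_const (of_nat c) * EE {1..N} else 0)"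
proof -
  have E: "EE {1..N} = lf q * EE ({1..N} - {q})" using assms by (intro EE_remove) auto
  have "lf q * ZZ N c s q = (QQ N + fps_const (of_nat c) * EE {1..N}) * (lf q * VVf N s q)
     - fps_const (of_nat c) * (lf q * EE ({1..N} - {q})) * Ff N s"
    unfolding ZZ_def by (simp add: algebra_simps)
  also have "\<dots> = (QQ N + fps_const (of_nat c) * EE {1..N}) * (Ff N s - (if s = q then 1 else 0))
     - fps_const (of_nat c) * EE {1..N} * Ff N s"
    using VVf_eq[OF assms] E by simp
  also have "\<dots> = QQ N * Ff N s - (if s = q then QQ N + fps_const (of_nat c) * EE {1..N} else 0)"
    by (simp add: algebra_simps)
  finally show ?thesis using R1[OF assms(1)] by simp
qed

lemma ZZ_neq:
  assumes "s \<in> {1..N}" "q \<in> {1..N}" "q \<noteq> s"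
  shows "ZZ N c s q = EE ({1..N} - {s} - {q})"
proof (rule lf_cancel[of q])
  have "EE ({1..N} - {s}) = lf q * EE ({1..N} - {s} - {q})"
    using assms by (intro EE_remove) auto
  then show "lf q * ZZ N c s q = lf q * EE ({1..N} - {s} - {q})"
    using lf_ZZ[OF assms(1,2), of c] assms by simp
qed

lemma ZZ_eq:
  assumes "s \<in> {1..N}"
  shows "ZZ N c s s = Abs_fps (\<lambda>k. (of_nat k - of_nat c) * EE ({1..N} - {s}) $ k)"
proof (rule lf_cancel[of s], rule fps_ext)
  fix k
  have "(lf s * Abs_fps (\<lambda>k. (of_nat k - of_nat c) * EE ({1..N} - {s}) $ k)) $ k
      = (EE ({1..N} - {s}) - (QQ N + fps_const (of_nat c) * EE {1..N})) $ k"
  proof (cases k)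
    case 0
    then show ?thesis using EE_rem_nth(2)[OF assms] by (simp add: lf_def QQ_nth algebra_simps)
  next
    case (Suc j)
    then show ?thesis using EE_rem_nth(1)[OF assms, of j] by (simp add: lf_def QQ_nth algebra_simps)
  qed
  then show "(lf s * ZZ N c s s) $ k = (lf s * Abs_fps (\<lambda>k. (of_nat k - of_nat c) * EE ({1..N} - {s}) $ k)) $ k"
    using lf_ZZ[OF assms assms, of c] by simp
qed

lemma ZZ_nth:
  "ZZ N c s q $ c = (\<Sum>z=1..c+1. of_nat z * EE {1..N} $ (c+1-z) * VV N (z-1) s q)
     - of_nat c * (\<Sum>z=1..c+1. EE ({1..N} - {q}) $ (z-1) * TT N (c+1-z) s)"
proof -
  have a: "((QQ N + fps_const (of_nat c) * EE {1..N}) * VVf N s q) $ c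
     = (\<Sum>i=0..c. of_nat (c + 1 - i) * EE {1..N} $ i * VV N (c - i) s q)"
    unfolding fps_mult_nth
    by (intro sum.cong refl) (auto simp: QQ_nth VVf_def of_nat_diff algebra_simps)
  also have "\<dots> = (\<Sum>z=1..c+1. of_nat z * EE {1..N} $ (c+1-z) * VV N (z-1) s q)"
    by (rule sum.reindex_bij_witness[where i="\<lambda>z. c + 1 - z" and j="\<lambda>i. c + 1 - i"]) auto
  finally have a': "((QQ N + fps_const (of_nat c) * EE {1..N}) * VVf N s q) $ c
     = (\<Sum>z=1..c+1. of_nat z * EE {1..N} $ (c+1-z) * VV N (z-1) s q)" .
  have "(fps_const (of_nat c) * EE ({1..N} - {q}) * Ff N s) $ c
     = of_nat c * (\<Sum>i=0..c. EE ({1..N} - {q}) $ i * TT N (c - i) s)"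
    by (simp only: mult.assoc fps_mult_left_const_nth) (simp add: fps_mult_nth Ff_def)
  also have "(\<Sum>i=0..c. EE ({1..N} - {q}) $ i * TT N (c - i) s) = (\<Sum>z=1..c+1. EE ({1..N} - {q}) $ (z-1) * TT N (c+1-z) s)"
    by (rule sum.reindex_bij_witness[where i="\<lambda>z. z - 1" and j="\<lambda>i. i + 1"]) auto
  finally show ?thesis unfolding ZZ_def using a' by simp
qed

lemma star:
  assumes "s \<in> {1..N}" "q \<in> {1..N}"
  shows "(if q \<noteq> s then EE ({1..N} - {s} - {q}) $ c else 0)
     = (\<Sum>z=1..c+1. of_nat z * EE {1..N} $ (c+1-z) * VV N (z-1) s q)
     - of_nat c * (\<Sum>z=1..c+1. EE ({1..N} - {q}) $ (z-1) * TT N (c+1-z) s)"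
proof (cases "q = s")
  case True
  then show ?thesis using ZZ_eq[OF assms(1), of c] ZZ_nth[of N c s q] by simp
next
  case False
  then show ?thesis using ZZ_neq[OF assms False, of c] ZZ_nth[of N c s q] by simp
qed




definition pcS :: "nat \<Rightarrow> ('v \<Rightarrow> 'v \<Rightarrow> bool) \<Rightarrow> 'v set \<Rightarrow> ('v \<Rightarrow> nat) set" where
  "pcS N adj W = {\<kappa> \<in> W \<rightarrow>\<^sub>E {1..N}. \<forall>u\<in>W. \<forall>v\<in>W. adj u v \<longrightarrow> \<kappa> u \<noteq> \<kappa> v}"

definition wt :: "'v set \<Rightarrow> ('v \<Rightarrow> nat) \<Rightarrow> pl" where "wt W \<kappa> = (\<Prod>v\<in>W. xv (\<kappa> v))"

lemma finite_pcS: "finite W \<Longrightarrow> finite (pcS N adj W)"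
  unfolding pcS_def by (rule finite_subset[of _ "W \<rightarrow>\<^sub>E {1..N}"]) (auto intro: finite_PiE)

lemma peel:
  assumes fin: "finite W" and v: "v \<notin> W" and irr: "\<not> adj v v"
    and M: "M \<subseteq> W" "\<And>u. u \<in> W \<Longrightarrow> (adj u v \<or> adj v u) \<longleftrightarrow> u \<in> M"
  shows "(\<Sum>\<kappa>\<in>pcS N adj (insert v W). wt (insert v W) \<kappa> * F (restrict \<kappa> W) (\<kappa> v))
       = (\<Sum>\<kappa>\<in>pcS N adj W. wt W \<kappa> * (\<Sum>q\<in>{1..N} - \<kappa> ` M. xv q * F \<kappa> q))"
proof -
  let ?T = "Sigma (pcS N adj W) (\<lambda>\<kappa>. {1..N} - \<kappa> ` M)"
  have eq1: "(\<Sum>\<kappa>\<in>pcS N adj W. wt W \<kappa> * (\<Sum>q\<in>{1..N} - \<kappa> ` M. xv q * F \<kappa> q))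
      = (\<Sum>\<kappa>\<in>pcS N adj W. \<Sum>q\<in>{1..N} - \<kappa> ` M. wt W \<kappa> * (xv q * F \<kappa> q))"
    by (simp add: sum_distrib_left)
  also have "\<dots> = (\<Sum>(\<kappa>,q)\<in>?T. wt W \<kappa> * (xv q * F \<kappa> q))"
    by (rule sum.Sigma) (auto simp: finite_pcS fin)
  finally have eq1: "(\<Sum>\<kappa>\<in>pcS N adj W. wt W \<kappa> * (\<Sum>q\<in>{1..N} - \<kappa> ` M. xv q * F \<kappa> q))
      = (\<Sum>(\<kappa>,q)\<in>?T. wt W \<kappa> * (xv q * F \<kappa> q))" .
  have eq2: "(\<Sum>\<kappa>\<in>pcS N adj (insert v W). wt (insert v W) \<kappa> * F (restrict \<kappa> W) (\<kappa> v)) = (\<Sum>(\<kappa>,q)\<in>?T. wt W \<kappa> * (xv q * F \<kappa> q))"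
  proof (rule sum.reindex_bij_witness[where i="\<lambda>(\<kappa>,q). \<kappa>(v:=q)" and j="\<lambda>\<kappa>. (restrict \<kappa> W, \<kappa> v)"])
    fix \<kappa> assume k: "\<kappa> \<in> pcS N adj (insert v W)"
    then have kE: "\<kappa> \<in> insert v W \<rightarrow>\<^sub>E {1..N}" by (simp add: pcS_def)
    show "(case (restrict \<kappa> W, \<kappa> v) of (\<kappa>, q) \<Rightarrow> \<kappa>(v := q)) = \<kappa>"
    proof
      fix x show "(case (restrict \<kappa> W, \<kappa> v) of (\<kappa>, q) \<Rightarrow> \<kappa>(v := q)) x = \<kappa> x"
        using kE by (cases "x = v"; cases "x \<in> W") (auto simp: PiE_def extensional_def)
    qed
    show "(restrict \<kappa> W, \<kappa> v) \<in> ?T"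
    proof -
      have r: "restrict \<kappa> W \<in> pcS N adj W" using k unfolding pcS_def by (auto simp: PiE_def Pi_def)
      have "\<kappa> v \<in> {1..N}" using kE by auto
      moreover have "\<kappa> v \<noteq> \<kappa> x" if "x \<in> M" for x
      proof -
        have xW: "x \<in> W" using that M by auto
        have "adj x v \<or> adj v x" using M(2)[OF xW] that by simp
        then show ?thesis using k xW unfolding pcS_def by auto
      qed
      ultimately show ?thesis using r M by auto
    qed
    have "wt (insert v W) \<kappa> = xv (\<kappa> v) * wt W (restrict \<kappa> W)"
      unfolding wt_def using fin v by (simp add: prod.insert)
    then show "(case (restrict \<kappa> W, \<kappa> v) of (\<kappa>, q) \<Rightarrow> wt W \<kappa> * (xv q * F \<kappa> q))
        = wt (insert v W) \<kappa> * F (restrict \<kappa> W) (\<kappa> v)" by (simp add: algebra_simps)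
  next
    fix p assume p: "p \<in> ?T"
    obtain \<kappa> q where pq: "p = (\<kappa>, q)" by force
    have k: "\<kappa> \<in> pcS N adj W" and q: "q \<in> {1..N}" "q \<notin> \<kappa> ` M" using p pq by auto
    have kE: "\<kappa> \<in> W \<rightarrow>\<^sub>E {1..N}" using k by (simp add: pcS_def)
    have "restrict (\<kappa>(v := q)) W = \<kappa>"
    proof
      fix x show "restrict (\<kappa>(v := q)) W x = \<kappa> x"
        using kE v by (auto simp: PiE_def extensional_def)
    qed
    then show "(restrict ((case p of (\<kappa>, q) \<Rightarrow> \<kappa>(v := q))) W, (case p of (\<kappa>, q) \<Rightarrow> \<kappa>(v := q)) v) = p"
      using pq by simp
    show "(case p of (\<kappa>, q) \<Rightarrow> \<kappa>(v := q)) \<in> pcS N adj (insert v W)"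
      unfolding pq pcS_def case_prod_conv mem_Collect_eq
    proof (intro conjI ballI impI)
      show "\<kappa>(v := q) \<in> insert v W \<rightarrow>\<^sub>E {1..N}" using kE q v by (auto simp: PiE_def extensional_def Pi_def)
    next
      fix x y assume xy: "x \<in> insert v W" "y \<in> insert v W" "adj x y"
      show "(\<kappa>(v := q)) x \<noteq> (\<kappa>(v := q)) y"
      proof (cases "x = v"; cases "y = v")
        assume "x = v" "y = v" then show ?thesis using xy irr by simp
      next
        assume a: "x = v" "y \<noteq> v"
        then have "y \<in> M" using xy M by auto
        then show ?thesis using a q by auto
      next
        assume a: "x \<noteq> v" "y = v"
        then have "x \<in> M" using xy M by auto
        then show ?thesis using a q by auto
      next
        assume a: "x \<noteq> v" "y \<noteq> v"
        then show ?thesis using xy k by (auto simp: pcS_def)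
      qed
    qed
  qed
  show ?thesis by (rule trans[OF eq2 eq1[symmetric]])
qed

lemma swap_neq:
  assumes "finite A"
  shows "(\<Sum>c\<in>A. \<Sum>q\<in>A-{c}. f c q) = (\<Sum>q\<in>A. \<Sum>c\<in>A-{q}. f c q)"
proof -
  have "(\<Sum>c\<in>A. \<Sum>q\<in>A-{c}. f c q) = (\<Sum>c\<in>A. \<Sum>q\<in>A. if q = c then 0 else f c q)"
    using assms by (intro sum.cong refl sum.mono_neutral_cong_left) auto
  also have "\<dots> = (\<Sum>q\<in>A. \<Sum>c\<in>A. if q = c then 0 else f c q)" by (rule sum.swap)
  also have "\<dots> = (\<Sum>q\<in>A. \<Sum>c\<in>A-{q}. f c q)"
    using assms by (intro sum.cong refl sum.mono_neutral_cong_right) auto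
  finally show ?thesis .
qed

lemma path_peel:
  assumes "finite B" "u 0 \<in> B" "inj_on u {1..k}" "u ` {1..k} \<inter> B = {}"
   and "\<And>i w. 1 \<le> i \<Longrightarrow> i \<le> k \<Longrightarrow> w \<in> B \<union> u ` {1..<i} \<Longrightarrow> (adj w (u i) \<or> adj (u i) w) \<longleftrightarrow> w = u (i - 1)"
   and "\<And>i. 1 \<le> i \<Longrightarrow> i \<le> k \<Longrightarrow> \<not> adj (u i) (u i)"
  shows "(\<Sum>\<kappa>\<in>pcS N adj (B \<union> u ` {1..k}). wt (B \<union> u ` {1..k}) \<kappa> * F (restrict \<kappa> B) * \<Phi> (\<kappa> (u k)))
       = (\<Sum>\<kappa>\<in>pcS N adj B. wt B \<kappa> * F \<kappa> * (\<Sum>q\<in>{1..N}. Wk N k (\<kappa> (u 0)) q * \<Phi> q))"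
  using assms
proof (induction k arbitrary: \<Phi>)
  case 0
  have e: "B \<union> u ` {1..0::nat} = B" by simp
  show ?case unfolding e
  proof (rule sum.cong[OF refl])
    fix \<kappa> assume k: "\<kappa> \<in> pcS N adj B"
    then have kE: "\<kappa> \<in> B \<rightarrow>\<^sub>E {1..N}" by (simp add: pcS_def)
    then have "restrict \<kappa> B = \<kappa>" by (simp add: PiE_def extensional_restrict)
    moreover have "(\<Sum>q\<in>{1..N}. Wk N 0 (\<kappa> (u 0)) q * \<Phi> q) = (\<Sum>q\<in>{1..N}. if \<kappa> (u 0) = q then \<Phi> q else 0)"
      by (intro sum.cong) auto
    moreover have "\<kappa> (u 0) \<in> {1..N}" using kE 0 by (auto simp: PiE_def Pi_def)
    ultimately have "(\<Sum>q\<in>{1..N}. Wk N 0 (\<kappa> (u 0)) q * \<Phi> q) = \<Phi> (\<kappa> (u 0))"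
      by (simp add: sum.delta)
    moreover note \<open>restrict \<kappa> B = \<kappa>\<close>
    ultimately show "wt B \<kappa> * F (restrict \<kappa> B) * \<Phi> (\<kappa> (u 0)) =
         wt B \<kappa> * F \<kappa> * (\<Sum>q\<in>{1..N}. Wk N 0 (\<kappa> (u 0)) q * \<Phi> q)" by simp
  qed
next
  case (Suc k)
  let ?W = "B \<union> u ` {1..k}"
  have W1: "B \<union> u ` {1..Suc k} = insert (u (Suc k)) ?W"
    by (auto simp: atLeastAtMostSuc_conv)
  have notin: "u (Suc k) \<notin> ?W"
  proof
    assume "u (Suc k) \<in> ?W"
    moreover have "u (Suc k) \<notin> B"
    proof -
      have "u (Suc k) \<in> u ` {1..Suc k}" by auto
      then show ?thesis using Suc.prems(4) by blast
    qed
    moreover have "u (Suc k) \<notin> u ` {1..k}"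
    proof
      assume "u (Suc k) \<in> u ` {1..k}"
      then obtain x where x: "x \<in> {1..k}" "u (Suc k) = u x" by auto
      then have "Suc k = x" using inj_onD[OF Suc.prems(3)] by auto
      then show False using x by auto
    qed
    ultimately show False by blast
  qed
  have ukW: "u k \<in> ?W" using Suc.prems(2) by (cases k) auto
  have adjW: "(adj w (u (Suc k)) \<or> adj (u (Suc k)) w) \<longleftrightarrow> w \<in> {u k}" if "w \<in> ?W" for w
    using Suc.prems(5)[of "Suc k" w] that by (auto simp: atLeastLessThanSuc_atLeastAtMost)
  have BW: "B \<subseteq> ?W" by auto
  define \<Phi>' where "\<Phi>' c = (\<Sum>q\<in>{1..N} - {c}. xv q * \<Phi> q)" for c
  have "(\<Sum>\<kappa>\<in>pcS N adj (B \<union> u ` {1..Suc k}). wt (B \<union> u ` {1..Suc k}) \<kappa> * F (restrict \<kappa> B) * \<Phi> (\<kappa> (u (Suc k))))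
      = (\<Sum>\<kappa>\<in>pcS N adj (insert (u (Suc k)) ?W). wt (insert (u (Suc k)) ?W) \<kappa> *
           (\<lambda>\<kappa>' q. F (restrict \<kappa>' B) * \<Phi> q) (restrict \<kappa> ?W) (\<kappa> (u (Suc k))))"
    unfolding W1 using BW by (intro sum.cong refl) (simp add: restrict_restrict Int_absorb1 mult.assoc)
  also have "\<dots> = (\<Sum>\<kappa>\<in>pcS N adj ?W. wt ?W \<kappa> * (\<Sum>q\<in>{1..N} - \<kappa> ` {u k}. xv q * (F (restrict \<kappa> B) * \<Phi> q)))"
    by (rule peel) (use Suc.prems notin ukW adjW in auto)
  also have "\<dots> = (\<Sum>\<kappa>\<in>pcS N adj ?W. wt ?W \<kappa> * F (restrict \<kappa> B) * \<Phi>' (\<kappa> (u k)))"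
    unfolding \<Phi>'_def by (intro sum.cong refl) (simp add: sum_distrib_left algebra_simps)
  also have "\<dots> = (\<Sum>\<kappa>\<in>pcS N adj B. wt B \<kappa> * F \<kappa> * (\<Sum>q\<in>{1..N}. Wk N k (\<kappa> (u 0)) q * \<Phi>' q))"
  proof (rule Suc.IH)
    have "u ` {1..k} \<subseteq> u ` {1..Suc k}" by auto
    then show "u ` {1..k} \<inter> B = {}" using Suc.prems(4) by blast
    show "inj_on u {1..k}" using Suc.prems(3) by (rule inj_on_subset) auto
  qed (use Suc.prems in auto)
  also have "\<dots> = (\<Sum>\<kappa>\<in>pcS N adj B. wt B \<kappa> * F \<kappa> * (\<Sum>q\<in>{1..N}. Wk N (Suc k) (\<kappa> (u 0)) q * \<Phi> q))"
  proof -
    have inner: "(\<Sum>c\<in>{1..N}. Wk N k (\<kappa> (u 0)) c * \<Phi>' c) = (\<Sum>q\<in>{1..N}. Wk N (Suc k) (\<kappa> (u 0)) q * \<Phi> q)" for \<kappa>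
    proof -
    have "(\<Sum>c\<in>{1..N}. Wk N k (\<kappa> (u 0)) c * \<Phi>' c) = (\<Sum>c\<in>{1..N}. \<Sum>q\<in>{1..N}-{c}. Wk N k (\<kappa> (u 0)) c * (xv q * \<Phi> q))"
      unfolding \<Phi>'_def by (simp add: sum_distrib_left)
    also have "\<dots> = (\<Sum>q\<in>{1..N}. \<Sum>c\<in>{1..N}-{q}. Wk N k (\<kappa> (u 0)) c * (xv q * \<Phi> q))"
      by (rule swap_neq) simp
    also have "\<dots> = (\<Sum>q\<in>{1..N}. Wk N (Suc k) (\<kappa> (u 0)) q * \<Phi> q)"
      by (simp add: sum_distrib_left sum_distrib_right algebra_simps)
    finally show ?thesis .
    qed
    then show ?thesis by simp
  qed
  finally show ?case .
qed


fun JG :: "nat \<Rightarrow> nat \<Rightarrow> nat set \<Rightarrow> (nat set \<Rightarrow> pl) \<Rightarrow> pl" where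
  "JG N 0 S G = G S"
| "JG N (Suc k) S G = JG N k S (\<lambda>S'. \<Sum>q\<in>{1..N} - S'. xv q * G (insert q S'))"

lemma clique_peel:
  assumes "finite B" "A \<subseteq> B" "inj_on w {1..k}" "w ` {1..k} \<inter> B = {}"
   and "\<And>i y. 1 \<le> i \<Longrightarrow> i \<le> k \<Longrightarrow> y \<in> B \<union> w ` {1..<i} \<Longrightarrow> (adj y (w i) \<or> adj (w i) y) \<longleftrightarrow> y \<in> A \<union> w ` {1..<i}"
   and "\<And>i. 1 \<le> i \<Longrightarrow> i \<le> k \<Longrightarrow> \<not> adj (w i) (w i)"
  shows "(\<Sum>\<kappa>\<in>pcS N adj (B \<union> w ` {1..k}). wt (B \<union> w ` {1..k}) \<kappa> * F (restrict \<kappa> B) * G (\<kappa> ` (A \<union> w ` {1..k})))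
       = (\<Sum>\<kappa>\<in>pcS N adj B. wt B \<kappa> * F \<kappa> * JG N k (\<kappa> ` A) G)"
  using assms
proof (induction k arbitrary: G)
  case 0
  have e: "B \<union> w ` {1..0::nat} = B" "A \<union> w ` {1..0::nat} = A" by simp_all
  show ?case unfolding e
  proof (rule sum.cong[OF refl])
    fix \<kappa> assume k: "\<kappa> \<in> pcS N adj B"
    then have kE: "\<kappa> \<in> B \<rightarrow>\<^sub>E {1..N}" by (simp add: pcS_def)
    then have "restrict \<kappa> B = \<kappa>" by (simp add: PiE_def extensional_restrict)
    then show "wt B \<kappa> * F (restrict \<kappa> B) * G (\<kappa> ` A) = wt B \<kappa> * F \<kappa> * JG N 0 (\<kappa> ` A) G" by simp
  qed
next
  case (Suc k)
  let ?W = "B \<union> w ` {1..k}"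
  let ?M = "A \<union> w ` {1..k}"
  let ?v = "w (Suc k)"
  have W1: "B \<union> w ` {1..Suc k} = insert ?v ?W"
    by (auto simp: atLeastAtMostSuc_conv)
  have M1: "A \<union> w ` {1..Suc k} = insert ?v ?M"
    by (auto simp: atLeastAtMostSuc_conv)
  have notin: "?v \<notin> ?W"
  proof
    assume "?v \<in> ?W"
    moreover have "?v \<notin> B"
    proof -
      have "?v \<in> w ` {1..Suc k}" by auto
      then show ?thesis using Suc.prems(4) by blast
    qed
    moreover have "?v \<notin> w ` {1..k}"
    proof
      assume "?v \<in> w ` {1..k}"
      then obtain x where x: "x \<in> {1..k}" "?v = w x" by auto
      then have "Suc k = x" using inj_onD[OF Suc.prems(3)] by auto
      then show False using x by auto
    qed
    ultimately show False by blast
  qed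
  have MW: "?M \<subseteq> ?W" using Suc.prems(2) by auto
  have adjW: "(adj y ?v \<or> adj ?v y) \<longleftrightarrow> y \<in> ?M" if "y \<in> ?W" for y
    using Suc.prems(5)[of "Suc k" y] that by (auto simp: atLeastLessThanSuc_atLeastAtMost)
  have BW: "B \<subseteq> ?W" by auto
  define G' where "G' S = (\<Sum>q\<in>{1..N} - S. xv q * G (insert q S))" for S
  have "(\<Sum>\<kappa>\<in>pcS N adj (B \<union> w ` {1..Suc k}). wt (B \<union> w ` {1..Suc k}) \<kappa> * F (restrict \<kappa> B) * G (\<kappa> ` (A \<union> w ` {1..Suc k})))
      = (\<Sum>\<kappa>\<in>pcS N adj (insert ?v ?W). wt (insert ?v ?W) \<kappa> *
           (\<lambda>\<kappa>' q. F (restrict \<kappa>' B) * G (insert q (\<kappa>' ` ?M))) (restrict \<kappa> ?W) (\<kappa> ?v))"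
  proof (unfold W1 M1, intro sum.cong refl)
    fix \<kappa> :: "_ \<Rightarrow> nat"
    have "restrict \<kappa> ?W ` ?M = \<kappa> ` ?M" using MW by auto
    then show "wt (insert ?v ?W) \<kappa> * F (restrict \<kappa> B) * G (\<kappa> ` insert ?v ?M) =
         wt (insert ?v ?W) \<kappa> * (\<lambda>\<kappa>' q. F (restrict \<kappa>' B) * G (insert q (\<kappa>' ` ?M))) (restrict \<kappa> ?W) (\<kappa> ?v)"
      using BW by (simp add: restrict_restrict Int_absorb1 mult.assoc)
  qed
  also have "\<dots> = (\<Sum>\<kappa>\<in>pcS N adj ?W. wt ?W \<kappa> * (\<Sum>q\<in>{1..N} - \<kappa> ` ?M. xv q * (F (restrict \<kappa> B) * G (insert q (\<kappa> ` ?M)))))"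
    by (rule peel) (use Suc.prems notin MW adjW in auto)
  also have "\<dots> = (\<Sum>\<kappa>\<in>pcS N adj ?W. wt ?W \<kappa> * F (restrict \<kappa> B) * G' (\<kappa> ` ?M))"
    unfolding G'_def by (intro sum.cong refl) (simp add: sum_distrib_left algebra_simps)
  also have "\<dots> = (\<Sum>\<kappa>\<in>pcS N adj B. wt B \<kappa> * F \<kappa> * JG N k (\<kappa> ` A) G')"
  proof (rule Suc.IH)
    have "w ` {1..k} \<subseteq> w ` {1..Suc k}" by auto
    then show "w ` {1..k} \<inter> B = {}" using Suc.prems(4) by blast
    show "inj_on w {1..k}" using Suc.prems(3) by (rule inj_on_subset) auto
  qed (use Suc.prems in auto)
  also have "\<dots> = (\<Sum>\<kappa>\<in>pcS N adj B. wt B \<kappa> * F \<kappa> * JG N (Suc k) (\<kappa> ` A) G)"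
    unfolding G'_def by simp
  finally show ?case .
qed

lemma JG_Suc': "JG N (Suc k) S G = (\<Sum>q\<in>{1..N} - S. xv q * JG N k (insert q S) G)"
proof (induction k arbitrary: S G)
  case 0 then show ?case by simp
next
  case (Suc k)
  have "JG N (Suc (Suc k)) S G = JG N (Suc k) S (\<lambda>S'. \<Sum>q\<in>{1..N} - S'. xv q * G (insert q S'))" by simp
  also have "\<dots> = (\<Sum>q\<in>{1..N} - S. xv q * JG N k (insert q S) (\<lambda>S'. \<Sum>q\<in>{1..N} - S'. xv q * G (insert q S')))"
    by (rule Suc.IH)
  also have "\<dots> = (\<Sum>q\<in>{1..N} - S. xv q * JG N (Suc k) (insert q S) G)" by simp
  finally show ?case .
qed

lemma EE_nth0: "finite D \<Longrightarrow> EE D $ 0 = 1"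
proof (induction D rule: finite_induct)
  case empty then show ?case by (simp add: EE_def)
next
  case (insert a D) then show ?case by (simp add: EE_insert lf_def fps_mult_nth)
qed

lemma sumL1:
  assumes "finite D"
  shows "(\<Sum>q\<in>D. xv q * EE (D - {q}) $ k) = of_nat (Suc k) * EE D $ Suc k"
proof -
  have "(fps_X * fps_deriv (EE D)) $ Suc k = of_nat (Suc k) * EE D $ Suc k" by simp
  moreover have "(\<Sum>c\<in>D. fps_const (xv c) * fps_X * EE (D - {c})) $ Suc k = (\<Sum>q\<in>D. xv q * EE (D - {q}) $ k)"
    by (simp only: fps_sum_nth mult.assoc fps_mult_left_const_nth) simp
  ultimately show ?thesis using L1[OF assms] by simp
qed

lemma JG_eval:
  assumes "S \<subseteq> {1..N}"
  shows "JG N k S (\<lambda>_. 1) = of_nat (fact k) * EE ({1..N} - S) $ k"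
  using assms
proof (induction k arbitrary: S)
  case 0 then show ?case by (simp add: EE_nth0)
next
  case (Suc k)
  have "JG N (Suc k) S (\<lambda>_. 1) = (\<Sum>q\<in>{1..N} - S. xv q * JG N k (insert q S) (\<lambda>_. 1))"
    by (rule JG_Suc')
  also have "\<dots> = (\<Sum>q\<in>{1..N} - S. xv q * (of_nat (fact k) * EE ({1..N} - S - {q}) $ k))"
  proof (intro sum.cong refl)
    fix q assume q: "q \<in> {1..N} - S"
    then have "{1..N} - insert q S = {1..N} - S - {q}" by auto
    then show "xv q * JG N k (insert q S) (\<lambda>_. 1) = xv q * (of_nat (fact k) * EE ({1..N} - S - {q}) $ k)"
      using Suc.IH[of "insert q S"] Suc.prems q by simp
  qed
  also have "\<dots> = of_nat (fact k) * (\<Sum>q\<in>{1..N} - S. xv q * EE ({1..N} - S - {q}) $ k)"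
    by (simp add: sum_distrib_left algebra_simps)
  also have "\<dots> = of_nat (fact k) * (of_nat (Suc k) * EE ({1..N} - S) $ Suc k)"
    by (subst sumL1) auto
  also have "\<dots> = of_nat (fact (Suc k)) * EE ({1..N} - S) $ Suc k"
    by (simp add: algebra_simps)
  finally show ?case .
qed

lemma single_sum:
  assumes "\<not> adj v v"
  shows "(\<Sum>\<kappa>\<in>pcS N adj {v}. wt {v} \<kappa> * \<Phi> (\<kappa> v)) = (\<Sum>q\<in>{1..N}. xv q * \<Phi> q)"
proof -
  have "(\<Sum>\<kappa>\<in>pcS N adj (insert v {}). wt (insert v {}) \<kappa> * (\<lambda>_ q. \<Phi> q) (restrict \<kappa> {}) (\<kappa> v))
     = (\<Sum>\<kappa>\<in>pcS N adj {}. wt {} \<kappa> * (\<Sum>q\<in>{1..N} - \<kappa> ` {}. xv q * (\<lambda>_ q. \<Phi> q) \<kappa> q))"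
    by (rule peel) (use assms in auto)
  moreover have "pcS N adj {} = {\<lambda>_. undefined}" by (simp add: pcS_def)
  ultimately show ?thesis by (simp add: wt_def)
qed

lemma transport:
  assumes inj: "inj_on f W" and adj: "\<And>a b. a \<in> W \<Longrightarrow> b \<in> W \<Longrightarrow> adj' (f a) (f b) \<longleftrightarrow> adj a b"
    and r: "r \<in> W"
  shows "(\<Sum>\<kappa>\<in>pcS N adj' (f ` W). wt (f ` W) \<kappa> * \<Psi> (\<kappa> (f r))) = (\<Sum>\<kappa>\<in>pcS N adj W. wt W \<kappa> * \<Psi> (\<kappa> r))"
proof (rule sum.reindex_bij_witness[where i="\<lambda>\<kappa> x. if x \<in> f ` W then \<kappa> (the_inv_into W f x) else undefined"
      and j="\<lambda>\<kappa>. restrict (\<kappa> \<circ> f) W"])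
  have inv: "the_inv_into W f (f y) = y" if "y \<in> W" for y using the_inv_into_f_f[OF inj that] .
  fix a assume a: "a \<in> pcS N adj' (f ` W)"
  then have aE: "a \<in> f ` W \<rightarrow>\<^sub>E {1..N}" by (simp add: pcS_def)
  show "(\<lambda>x. if x \<in> f ` W then restrict (a \<circ> f) W (the_inv_into W f x) else undefined) = a"
  proof
    fix x
    show "(if x \<in> f ` W then restrict (a \<circ> f) W (the_inv_into W f x) else undefined) = a x"
      using aE inv by (cases "x \<in> f ` W") (auto simp: PiE_def extensional_def)
  qed
  show "restrict (a \<circ> f) W \<in> pcS N adj W"
    using a adj unfolding pcS_def by (auto simp: PiE_def Pi_def)
  have "wt (f ` W) a = wt W (restrict (a \<circ> f) W)"
    unfolding wt_def using inj by (simp add: prod.reindex)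
  then show "wt W (restrict (a \<circ> f) W) * \<Psi> (restrict (a \<circ> f) W r) = wt (f ` W) a * \<Psi> (a (f r))"
    using r by simp
next
  have inv: "the_inv_into W f (f y) = y" if "y \<in> W" for y using the_inv_into_f_f[OF inj that] .
  fix b assume b: "b \<in> pcS N adj W"
  then have bE: "b \<in> W \<rightarrow>\<^sub>E {1..N}" by (simp add: pcS_def)
  show "restrict ((\<lambda>x. if x \<in> f ` W then b (the_inv_into W f x) else undefined) \<circ> f) W = b"
  proof
    fix y
    show "restrict ((\<lambda>x. if x \<in> f ` W then b (the_inv_into W f x) else undefined) \<circ> f) W y = b y"
      using bE inv by (cases "y \<in> W") (auto simp: PiE_def extensional_def)
  qed
  show "(\<lambda>x. if x \<in> f ` W then b (the_inv_into W f x) else undefined) \<in> pcS N adj' (f ` W)"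
    using b adj inv unfolding pcS_def by (auto simp: PiE_def Pi_def extensional_def)
qed




definition ind :: "'v set \<Rightarrow> ('v \<Rightarrow>\<^sub>0 nat)" where
  "ind W = (\<Sum>v\<in>W. Poly_Mapping.single v 1)"

lemma wt_single: "finite W \<Longrightarrow> wt W \<kappa> = Poly_Mapping.single (\<Sum>v\<in>W. Poly_Mapping.single (\<kappa> v) 1) 1"
proof (induction W rule: finite_induct)
  case empty then show ?case by (simp add: wt_def)
next
  case (insert a W)
  then show ?case by (simp add: wt_def xv_def mult_single)
qed

lemma lookup_sum_single: "finite W \<Longrightarrow> Poly_Mapping.lookup (\<Sum>v\<in>W. Poly_Mapping.single (\<kappa> v) (1::nat)) i = card {v\<in>W. \<kappa> v = i}"
  by (simp add: lookup_sum lookup_single when_def sum.If_cases Int_def conj_commute)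

lemma bridge:
  assumes fin: "finite W" and keys: "\<forall>i\<in>Poly_Mapping.keys \<alpha>. i \<le> N"
  shows "csf (W, adj) \<alpha> = Poly_Mapping.lookup (\<Sum>\<kappa>\<in>pcS N adj W. wt W \<kappa>) \<alpha>"
proof -
  let ?mono = "\<lambda>\<kappa>. (\<Sum>v\<in>W. Poly_Mapping.single (\<kappa> v) (1::nat))"
  have eqv: "?mono \<kappa> = \<alpha> \<longleftrightarrow> (\<forall>i. card {v\<in>W. \<kappa> v = i} = Poly_Mapping.lookup \<alpha> i)" for \<kappa>
  proof -
    have "?mono \<kappa> = \<alpha> \<longleftrightarrow> (\<forall>i. Poly_Mapping.lookup (?mono \<kappa>) i = Poly_Mapping.lookup \<alpha> i)"
      by (simp add: poly_mapping_eq_iff fun_eq_iff)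
    then show ?thesis using lookup_sum_single[OF fin, of \<kappa>] by simp
  qed
  have set: "{\<kappa>. proper_coloring (W, adj) \<kappa> \<and> (\<forall>i. card {v\<in>W. \<kappa> v = i} = Poly_Mapping.lookup \<alpha> i)}
      = {\<kappa>\<in>pcS N adj W. ?mono \<kappa> = \<alpha>}"
  proof (intro set_eqI iffI)
    fix \<kappa> assume a: "\<kappa> \<in> {\<kappa>. proper_coloring (W, adj) \<kappa> \<and> (\<forall>i. card {v\<in>W. \<kappa> v = i} = Poly_Mapping.lookup \<alpha> i)}"
    then have pc: "proper_coloring (W, adj) \<kappa>" and sz: "\<forall>i. card {v\<in>W. \<kappa> v = i} = Poly_Mapping.lookup \<alpha> i" by auto
    have "\<kappa> v \<le> N" if v: "v \<in> W" for v
    proof -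
      have "card {u\<in>W. \<kappa> u = \<kappa> v} \<noteq> 0" using v fin by auto
      then have "\<kappa> v \<in> Poly_Mapping.keys \<alpha>" using sz by (simp add: in_keys_iff)
      then show ?thesis using keys by auto
    qed
    then show "\<kappa> \<in> {\<kappa>\<in>pcS N adj W. ?mono \<kappa> = \<alpha>}"
      using pc sz eqv unfolding proper_coloring_def pcS_def by (auto simp: PiE_def Pi_def)
  next
    fix \<kappa> assume "\<kappa> \<in> {\<kappa>\<in>pcS N adj W. ?mono \<kappa> = \<alpha>}"
    then show "\<kappa> \<in> {\<kappa>. proper_coloring (W, adj) \<kappa> \<and> (\<forall>i. card {v\<in>W. \<kappa> v = i} = Poly_Mapping.lookup \<alpha> i)}"
      using eqv unfolding proper_coloring_def pcS_def by (auto simp: PiE_def Pi_def)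
  qed
  have "Poly_Mapping.lookup (\<Sum>\<kappa>\<in>pcS N adj W. wt W \<kappa>) \<alpha> = (\<Sum>\<kappa>\<in>pcS N adj W. if ?mono \<kappa> = \<alpha> then 1 else 0)"
    using fin by (simp add: lookup_sum wt_single lookup_single when_def)
  also have "\<dots> = of_nat (card {\<kappa>\<in>pcS N adj W. ?mono \<kappa> = \<alpha>})"
    using finite_pcS[OF fin] by (simp add: sum.If_cases Int_def conj_commute)
  finally have l: "Poly_Mapping.lookup (\<Sum>\<kappa>\<in>pcS N adj W. wt W \<kappa>) \<alpha> = of_nat (card {\<kappa>\<in>pcS N adj W. ?mono \<kappa> = \<alpha>})" .
  have "csf (W, adj) \<alpha> = of_nat (card {\<kappa>\<in>pcS N adj W. ?mono \<kappa> = \<alpha>})"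
    unfolding csf_def fst_conv by (subst set[symmetric]) (rule refl)
  then show ?thesis using l by simp
qed


lemma EE_subsets:
  assumes "finite D"
  shows "EE D $ k = (\<Sum>S\<in>{S. S \<subseteq> D \<and> card S = k}. prod xv S)"
  using assms
proof (induction D arbitrary: k rule: finite_induct)
  case empty
  show ?case
  proof (cases k)
    case 0
    then have e: "{S. S \<subseteq> {} \<and> card S = k} = {{}}" by auto
    show ?thesis by (subst e) (simp add: EE_def 0)
  next
    case (Suc j)
    then have "{S. S \<subseteq> {} \<and> card S = k} = {}" by auto
    then show ?thesis using Suc by (simp add: EE_def)
  qed
next
  case (insert a D)
  show ?case
  proof (cases k)
    case 0
    have "{S. S \<subseteq> insert a D \<and> card S = 0} = {{}}"
      using insert.hyps by (auto dest: finite_subset)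
    then show ?thesis using 0 insert by (simp add: EE_nth0)
  next
    case (Suc j)
    let ?A1 = "{S. S \<subseteq> D \<and> card S = Suc j}"
    let ?A0 = "{S. S \<subseteq> D \<and> card S = j}"
    have fin1: "finite ?A1" "finite ?A0" using insert.hyps by auto
    have eq: "{S. S \<subseteq> insert a D \<and> card S = Suc j} = ?A1 \<union> insert a ` ?A0"
    proof (intro set_eqI iffI)
      fix S assume S: "S \<in> {S. S \<subseteq> insert a D \<and> card S = Suc j}"
      show "S \<in> ?A1 \<union> insert a ` ?A0"
      proof (cases "a \<in> S")
        case True
        have "finite S" using S insert.hyps by (auto dest: finite_subset)
        then have "S - {a} \<in> ?A0" using S True insert.hyps by auto
        moreover have "S = insert a (S - {a})" using True by auto
        ultimately show ?thesis by blast
      next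
        case False then show ?thesis using S by auto
      qed
    next
      fix S assume "S \<in> ?A1 \<union> insert a ` ?A0"
      then show "S \<in> {S. S \<subseteq> insert a D \<and> card S = Suc j}"
      proof
        assume "S \<in> ?A1" then show ?thesis by auto
      next
        assume "S \<in> insert a ` ?A0"
        then obtain T where T: "T \<in> ?A0" "S = insert a T" by auto
        have "finite T" using T insert.hyps by (auto dest: finite_subset)
        moreover have "a \<notin> T" using T insert.hyps by auto
        ultimately show ?thesis using T by auto
      qed
    qed
    have disj: "?A1 \<inter> insert a ` ?A0 = {}" using insert.hyps by auto
    have inj: "inj_on (insert a) ?A0"
    proof (rule inj_onI)
      fix S T assume st: "S \<in> ?A0" "T \<in> ?A0" "insert a S = insert a T"
      then have "a \<notin> S" "a \<notin> T" using insert.hyps by auto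
      then show "S = T" using st(3) by (metis Diff_insert_absorb)
    qed
    have "(\<Sum>S\<in>{S. S \<subseteq> insert a D \<and> card S = Suc j}. prod xv S)
        = (\<Sum>S\<in>?A1. prod xv S) + (\<Sum>S\<in>insert a ` ?A0. prod xv S)"
      unfolding eq using fin1 disj by (simp add: sum.union_disjoint)
    also have "(\<Sum>S\<in>insert a ` ?A0. prod xv S) = (\<Sum>S\<in>?A0. xv a * prod xv S)"
    proof -
      have "(\<Sum>S\<in>insert a ` ?A0. prod xv S) = (\<Sum>S\<in>?A0. prod xv (insert a S))"
        using inj by (simp add: sum.reindex)
      also have "\<dots> = (\<Sum>S\<in>?A0. xv a * prod xv S)"
      proof (intro sum.cong refl)
        fix S assume "S \<in> ?A0"
        then have "finite S" "a \<notin> S" using insert.hyps by (auto dest: finite_subset)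
        then show "prod xv (insert a S) = xv a * prod xv S" by simp
      qed
      finally show ?thesis .
    qed
    also have "\<dots> = xv a * EE D $ j" using insert.IH by (simp add: sum_distrib_left)
    finally have R: "(\<Sum>S\<in>{S. S \<subseteq> insert a D \<and> card S = Suc j}. prod xv S) = EE D $ Suc j + xv a * EE D $ j"
      using insert.IH by simp
    have "EE (insert a D) $ Suc j = EE D $ Suc j + xv a * EE D $ j"
      using insert.hyps by (simp add: EE_insert lf_def distrib_right mult.assoc)
    then show ?thesis using R Suc by simp
  qed
qed

lemma lookup_ind: "finite S \<Longrightarrow> Poly_Mapping.lookup (ind S) i = (if i \<in> S then 1 else 0)"
  unfolding ind_def by (simp add: lookup_sum lookup_single when_def)

lemma keys_ind: "finite S \<Longrightarrow> Poly_Mapping.keys (ind S) = S"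
  by (auto simp: in_keys_iff lookup_ind split: if_splits)

lemma prod_xv: "finite S \<Longrightarrow> prod xv S = Poly_Mapping.single (ind S) 1"
  using wt_single[of S id] by (simp add: wt_def ind_def)

lemma elem_bridge:
  assumes keys: "\<forall>i\<in>Poly_Mapping.keys \<beta>. i \<le> N"
  shows "Poly_Mapping.lookup (EE {1..N} $ k) \<beta> = elem_sf k \<beta>"
proof -
  let ?A = "{S. S \<subseteq> {1..N} \<and> card S = k}"
  have finA: "finite ?A" by auto
  have "Poly_Mapping.lookup (EE {1..N} $ k) \<beta> = (\<Sum>S\<in>?A. if ind S = \<beta> then 1 else 0)"
    unfolding EE_subsets[OF finite_atLeastAtMost] lookup_sum
  proof (rule sum.cong[OF refl])
    fix S assume "S \<in> ?A"
    then have "finite S" using finite_subset[of S "{1..N}"] by auto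
    then show "Poly_Mapping.lookup (prod xv S) \<beta> = (if ind S = \<beta> then 1 else 0)"
      by (simp add: prod_xv lookup_single when_def)
  qed
  also have "\<dots> = of_nat (card {S\<in>?A. ind S = \<beta>})"
    using finA by (simp add: sum.If_cases Int_def conj_commute)
  also have "\<dots> = elem_sf k \<beta>"
  proof (cases "Poly_Mapping.lookup \<beta> 0 = 0 \<and> (\<forall>i. Poly_Mapping.lookup \<beta> i \<le> 1) \<and> sum (Poly_Mapping.lookup \<beta>) (Poly_Mapping.keys \<beta>) = k")
    case True
    have b1: "Poly_Mapping.lookup \<beta> i = 1" if "i \<in> Poly_Mapping.keys \<beta>" for i
    proof -
      have "Poly_Mapping.lookup \<beta> i \<le> 1" "Poly_Mapping.lookup \<beta> i \<noteq> 0"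
        using True that by (auto simp: in_keys_iff)
      then show ?thesis by linarith
    qed
    have ib: "ind (Poly_Mapping.keys \<beta>) = \<beta>"
    proof (rule poly_mapping_eqI)
      fix i show "Poly_Mapping.lookup (ind (Poly_Mapping.keys \<beta>)) i = Poly_Mapping.lookup \<beta> i"
      proof (cases "i \<in> Poly_Mapping.keys \<beta>")
        case True
        then show ?thesis using b1[OF True] lookup_ind[OF finite_keys, of \<beta> i] by simp
      next
        case False
        then have "Poly_Mapping.lookup \<beta> i = 0" by (simp add: in_keys_iff)
        then show ?thesis using False lookup_ind[OF finite_keys, of \<beta> i] by simp
      qed
    qed
    have "sum (Poly_Mapping.lookup \<beta>) (Poly_Mapping.keys \<beta>) = (\<Sum>i\<in>Poly_Mapping.keys \<beta>. 1)"
      by (rule sum.cong) (auto simp: b1)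
    then have "card (Poly_Mapping.keys \<beta>) = sum (Poly_Mapping.lookup \<beta>) (Poly_Mapping.keys \<beta>)"
      by simp
    then have ck: "card (Poly_Mapping.keys \<beta>) = k"
      using True by simp
    have ks: "Poly_Mapping.keys \<beta> \<subseteq> {1..N}"
    proof
      fix i assume i: "i \<in> Poly_Mapping.keys \<beta>"
      then have "Poly_Mapping.lookup \<beta> i \<noteq> 0" by (simp add: in_keys_iff)
      then have "i \<noteq> 0" using True by (cases "i = 0") auto
      then show "i \<in> {1..N}" using i keys by auto
    qed
    have "{S\<in>?A. ind S = \<beta>} = {Poly_Mapping.keys \<beta>}"
    proof (intro set_eqI iffI)
      fix S assume S: "S \<in> {S\<in>?A. ind S = \<beta>}"
      then have fS: "finite S" using finite_subset[of S "{1..N}"] by auto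
      have "ind S = \<beta>" using S by simp
      then have "Poly_Mapping.keys \<beta> = S" using keys_ind[OF fS] by simp
      then show "S \<in> {Poly_Mapping.keys \<beta>}" by simp
    next
      fix S assume "S \<in> {Poly_Mapping.keys \<beta>}"
      then show "S \<in> {S\<in>?A. ind S = \<beta>}" using ck ks ib by simp
    qed
    then show ?thesis using True by (simp add: elem_sf_def)
  next
    case False
    have e0: "{S\<in>?A. ind S = \<beta>} = {}"
    proof (rule ccontr)
      assume "{S\<in>?A. ind S = \<beta>} \<noteq> {}"
      then obtain S where S: "S \<subseteq> {1..N}" "card S = k" "ind S = \<beta>" by auto
      have fS: "finite S" using S(1) by (rule finite_subset) auto
      have lk: "Poly_Mapping.lookup \<beta> i = (if i \<in> S then 1 else 0)" for i
        using lookup_ind[OF fS, of i] S(3) by simp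
      have kS: "Poly_Mapping.keys \<beta> = S" using keys_ind[OF fS] S(3) by simp
      have "Poly_Mapping.lookup \<beta> 0 = 0" using S(1) lk[of 0] by auto
      moreover have "\<forall>i. Poly_Mapping.lookup \<beta> i \<le> 1" using lk by simp
      moreover have "sum (Poly_Mapping.lookup \<beta>) (Poly_Mapping.keys \<beta>) = k"
      proof -
        have "sum (Poly_Mapping.lookup \<beta>) S = (\<Sum>i\<in>S. 1)" by (rule sum.cong) (auto simp: lk)
        then show ?thesis using kS S(2) by simp
      qed
      ultimately show False using False by simp
    qed
    have "of_nat (card {S\<in>?A. ind S = \<beta>}) = (0::rat)" by (subst e0) simp
    moreover have "elem_sf k \<beta> = 0" using False by (simp add: elem_sf_def)
    ultimately show ?thesis by simp
  qed
  finally show ?thesis .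
qed


lemma finite_decomp: "finite {(\<beta>::nat \<Rightarrow>\<^sub>0 nat, \<gamma>). \<beta> + \<gamma> = \<alpha>}"
proof -
  let ?L = "{l::nat \<Rightarrow>\<^sub>0 nat. \<forall>i. Poly_Mapping.lookup l i \<le> Poly_Mapping.lookup \<alpha> i}"
  have inj: "inj_on (\<lambda>l. restrict (Poly_Mapping.lookup l) (Poly_Mapping.keys \<alpha>)) ?L"
  proof (rule inj_onI)
    fix l l' assume l: "l \<in> ?L" "l' \<in> ?L"
      and e: "restrict (Poly_Mapping.lookup l) (Poly_Mapping.keys \<alpha>) = restrict (Poly_Mapping.lookup l') (Poly_Mapping.keys \<alpha>)"
    show "l = l'"
    proof (rule poly_mapping_eqI)
      fix i show "Poly_Mapping.lookup l i = Poly_Mapping.lookup l' i"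
      proof (cases "i \<in> Poly_Mapping.keys \<alpha>")
        case True then show ?thesis using fun_cong[OF e, of i] by simp
      next
        case False
        then have "Poly_Mapping.lookup \<alpha> i = 0" by (simp add: in_keys_iff)
        then show ?thesis using l by (metis (mono_tags, lifting) le_zero_eq mem_Collect_eq)
      qed
    qed
  qed
  have "(\<lambda>l. restrict (Poly_Mapping.lookup l) (Poly_Mapping.keys \<alpha>)) ` ?L \<subseteq> Poly_Mapping.keys \<alpha> \<rightarrow>\<^sub>E {0..Max (Poly_Mapping.range \<alpha>)}"
  proof
    fix f assume "f \<in> (\<lambda>l. restrict (Poly_Mapping.lookup l) (Poly_Mapping.keys \<alpha>)) ` ?L"
    then obtain l where l: "l \<in> ?L" "f = restrict (Poly_Mapping.lookup l) (Poly_Mapping.keys \<alpha>)" by auto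
    have "Poly_Mapping.lookup l i \<le> Max (Poly_Mapping.range \<alpha>)" if "i \<in> Poly_Mapping.keys \<alpha>" for i
    proof -
      have "Poly_Mapping.lookup \<alpha> i \<in> Poly_Mapping.range \<alpha>"
        using that by (simp add: Poly_Mapping.range.rep_eq in_keys_iff)
      then have "Poly_Mapping.lookup \<alpha> i \<le> Max (Poly_Mapping.range \<alpha>)" by simp
      then show ?thesis using l(1) le_trans by blast
    qed
    then show "f \<in> Poly_Mapping.keys \<alpha> \<rightarrow>\<^sub>E {0..Max (Poly_Mapping.range \<alpha>)}" using l by auto
  qed
  then have "finite ((\<lambda>l. restrict (Poly_Mapping.lookup l) (Poly_Mapping.keys \<alpha>)) ` ?L)"
    by (rule finite_subset) (intro finite_PiE; simp)
  then have fL: "finite ?L" using finite_imageD[OF _ inj] by blast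
  have "{(\<beta>::nat \<Rightarrow>\<^sub>0 nat, \<gamma>). \<beta> + \<gamma> = \<alpha>} \<subseteq> ?L \<times> ?L"
    by (auto simp: lookup_add)
  then show ?thesis by (rule finite_subset[OF _ finite_cartesian_product[OF fL fL]])
qed

lemma sf_mult_lookup:
  "sf_mult (Poly_Mapping.lookup P) (Poly_Mapping.lookup Q) \<alpha> = Poly_Mapping.lookup (P * Q :: pl) \<alpha>"
proof -
  let ?D = "{(\<beta>::nat \<Rightarrow>\<^sub>0 nat, \<gamma>). \<beta> + \<gamma> = \<alpha>}"
  let ?L = "fst ` ?D"
  have fD: "finite ?D" by (rule finite_decomp)
  have inner: "Sum_any (\<lambda>q. Poly_Mapping.lookup Q q when \<alpha> = l + q) = (Poly_Mapping.lookup Q (\<alpha> - l) when \<alpha> = l + (\<alpha> - l))" for l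
  proof -
    have e: "(\<lambda>q. Poly_Mapping.lookup Q q when \<alpha> = l + q) = (\<lambda>q. if q = \<alpha> - l then (Poly_Mapping.lookup Q q when \<alpha> = l + q) else 0)"
      by (rule ext) (auto simp: when_def)
    show ?thesis unfolding e by (rule Sum_any.delta)
  qed
  have "Poly_Mapping.lookup (P * Q) \<alpha> = Sum_any (\<lambda>l. Poly_Mapping.lookup P l * (Poly_Mapping.lookup Q (\<alpha> - l) when \<alpha> = l + (\<alpha> - l)))"
    by (simp add: lookup_mult inner)
  also have "\<dots> = (\<Sum>l\<in>?L. Poly_Mapping.lookup P l * (Poly_Mapping.lookup Q (\<alpha> - l) when \<alpha> = l + (\<alpha> - l)))"
  proof (rule Sum_any.expand_superset)
    show "finite ?L" using fD by simp
    show "{l. Poly_Mapping.lookup P l * (Poly_Mapping.lookup Q (\<alpha> - l) when \<alpha> = l + (\<alpha> - l)) \<noteq> 0} \<subseteq> ?L"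
    proof
      fix l assume "l \<in> {l. Poly_Mapping.lookup P l * (Poly_Mapping.lookup Q (\<alpha> - l) when \<alpha> = l + (\<alpha> - l)) \<noteq> 0}"
      then have "\<alpha> = l + (\<alpha> - l)" by (auto simp: when_def split: if_splits)
      then have "(l, \<alpha> - l) \<in> ?D" by simp
      then show "l \<in> ?L" by force
    qed
  qed
  also have "\<dots> = (\<Sum>l\<in>?L. Poly_Mapping.lookup P l * Poly_Mapping.lookup Q (\<alpha> - l))"
    by (intro sum.cong refl) (auto simp: when_def)
  also have "\<dots> = sf_mult (Poly_Mapping.lookup P) (Poly_Mapping.lookup Q) \<alpha>"
    unfolding sf_mult_def
    by (rule sum.reindex_bij_witness[where i=fst and j="\<lambda>l. (l, \<alpha> - l)"]) auto
  finally show ?thesis by simp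
qed

lemma lookup_of_nat_mult: "Poly_Mapping.lookup (of_nat n * P :: pl) \<alpha> = of_nat n * Poly_Mapping.lookup P \<alpha>"
  by (induction n) (simp_all add: lookup_add distrib_right)

lemma sf_mult_cong:
  assumes "\<And>\<beta> \<gamma>. \<beta> + \<gamma> = \<alpha> \<Longrightarrow> f \<beta> = f' \<beta> \<and> g \<gamma> = g' \<gamma>"
  shows "sf_mult f g \<alpha> = sf_mult f' g' \<alpha>"
  unfolding sf_mult_def using assms by (intro sum.cong refl) auto

lemma keys_le: "\<beta> + \<gamma> = (\<alpha>::nat \<Rightarrow>\<^sub>0 nat) \<Longrightarrow> Poly_Mapping.keys \<beta> \<subseteq> Poly_Mapping.keys \<alpha> \<and> Poly_Mapping.keys \<gamma> \<subseteq> Poly_Mapping.keys \<alpha>"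
  by (auto simp: in_keys_iff lookup_add)




lemma tv_simps: "tail_vertex r 0 = Inl r" "i \<noteq> 0 \<Longrightarrow> tail_vertex r i = Inr i"
  by (simp_all add: tail_vertex_def)

lemma tailed_adj:
  "snd (tailed (V, E) r k) a b \<longleftrightarrow>
     (\<exists>u v. a = Inl u \<and> b = Inl v \<and> u \<in> V \<and> v \<in> V \<and> (E u v \<or> E v u)) \<or>
     (\<exists>i<k. (a = tail_vertex r i \<and> b = tail_vertex r (i+1)) \<or> (b = tail_vertex r i \<and> a = tail_vertex r (i+1)))"
  unfolding tailed_def mk_graph_def by auto

lemma tv_eq_Inr: "tail_vertex r j = Inr i \<longleftrightarrow> j = i \<and> i \<noteq> 0"
  by (auto simp: tail_vertex_def)

lemma tailed_nbr:
  assumes "1 \<le> i"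
  shows "(snd (tailed (V,E) r k) w (Inr i) \<or> snd (tailed (V,E) r k) (Inr i) w) \<longleftrightarrow>
    (i \<le> k \<and> w = tail_vertex r (i - 1)) \<or> (i < k \<and> w = Inr (i + 1))"
proof -
  have "(snd (tailed (V,E) r k) w (Inr i) \<or> snd (tailed (V,E) r k) (Inr i) w) \<longleftrightarrow>
     (\<exists>j<k. (w = tail_vertex r j \<and> Inr i = tail_vertex r (j+1)) \<or> (Inr i = tail_vertex r j \<and> w = tail_vertex r (j+1)))"
    unfolding tailed_adj by auto
  also have "\<dots> \<longleftrightarrow> (i \<le> k \<and> w = tail_vertex r (i - 1)) \<or> (i < k \<and> w = Inr (i + 1))"
  proof
    assume "\<exists>j<k. (w = tail_vertex r j \<and> Inr i = tail_vertex r (j+1)) \<or> (Inr i = tail_vertex r j \<and> w = tail_vertex r (j+1))"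
    then obtain j where j: "j < k" "(w = tail_vertex r j \<and> Inr i = tail_vertex r (j+1)) \<or> (Inr i = tail_vertex r j \<and> w = tail_vertex r (j+1))" by blast
    then show "(i \<le> k \<and> w = tail_vertex r (i - 1)) \<or> (i < k \<and> w = Inr (i + 1))"
      by (auto simp: tv_eq_Inr[symmetric] eq_commute[of "Inr i"] tail_vertex_def split: if_splits)
  next
    assume "(i \<le> k \<and> w = tail_vertex r (i - 1)) \<or> (i < k \<and> w = Inr (i + 1))"
    then show "\<exists>j<k. (w = tail_vertex r j \<and> Inr i = tail_vertex r (j+1)) \<or> (Inr i = tail_vertex r j \<and> w = tail_vertex r (j+1))"
    proof
      assume a: "i \<le> k \<and> w = tail_vertex r (i - 1)"
      then show ?thesis using assms by (intro exI[of _ "i - 1"]) (auto simp: tail_vertex_def)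
    next
      assume a: "i < k \<and> w = Inr (i + 1)"
      then show ?thesis using assms by (intro exI[of _ i]) (auto simp: tail_vertex_def)
    qed
  qed
  finally show ?thesis .
qed

lemma tailed_P:
  assumes fin: "finite V" and r: "r \<in> V" and sym: "\<And>u v. E u v \<Longrightarrow> E v u"
  shows "(\<Sum>\<kappa>\<in>pcS N (snd (tailed (V,E) r k)) (fst (tailed (V,E) r k)). wt (fst (tailed (V,E) r k)) \<kappa>)
       = (\<Sum>\<kappa>\<in>pcS N E V. wt V \<kappa> * TT N k (\<kappa> r))"
proof -
  let ?adj = "snd (tailed (V,E) r k)"
  have ti: "tail_vertex r ` {1..k} = Inr ` {1..k}" by (rule image_cong) (auto simp: tail_vertex_def)
  have fstT: "fst (tailed (V,E) r k) = Inl ` V \<union> tail_vertex r ` {1..k}"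
    unfolding ti by (simp add: tailed_def mk_graph_def)
  have "(\<Sum>\<kappa>\<in>pcS N ?adj (Inl ` V \<union> tail_vertex r ` {1..k}). wt (Inl ` V \<union> tail_vertex r ` {1..k}) \<kappa> * (\<lambda>_. 1) (restrict \<kappa> (Inl ` V)) * (\<lambda>_. 1) (\<kappa> (tail_vertex r k)))
     = (\<Sum>\<kappa>\<in>pcS N ?adj (Inl ` V). wt (Inl ` V) \<kappa> * (\<lambda>_. 1) \<kappa> * (\<Sum>q\<in>{1..N}. Wk N k (\<kappa> (tail_vertex r 0)) q * (\<lambda>_. 1) q))"
  proof (rule path_peel)
    show "finite (Inl ` V)" using fin by simp
    show "tail_vertex r 0 \<in> Inl ` V" using r by (simp add: tv_simps)
    show "inj_on (tail_vertex r) {1..k}" by (rule inj_onI) (simp add: tail_vertex_def split: if_splits)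
    show "tail_vertex r ` {1..k} \<inter> Inl ` V = {}" unfolding ti by auto
  next
    fix i w assume i: "1 \<le> i" "i \<le> k" and w: "w \<in> Inl ` V \<union> tail_vertex r ` {1..<i}"
    have e: "tail_vertex r i = Inr i" using i by (simp add: tail_vertex_def)
    have wn: "w \<noteq> Inr (i+1)" using w unfolding ti[symmetric] by (auto simp: tail_vertex_def)
    show "(?adj w (tail_vertex r i) \<or> ?adj (tail_vertex r i) w) \<longleftrightarrow> w = tail_vertex r (i - 1)"
      unfolding e using tailed_nbr[OF i(1), of V E r k w] i(2) wn by blast
  next
    fix i assume i: "1 \<le> i" "i \<le> k"
    have e: "tail_vertex r i = Inr i" using i by (simp add: tail_vertex_def)
    have n1: "Inr i \<noteq> tail_vertex r (i - 1)" using i by (simp add: tail_vertex_def) arith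
    have n2: "(Inr i :: 'a + nat) \<noteq> Inr (i + 1)" by simp
    show "\<not> ?adj (tail_vertex r i) (tail_vertex r i)"
      unfolding e using tailed_nbr[OF i(1), of V E r k "Inr i"] n1 n2 by blast
  qed
  then have "(\<Sum>\<kappa>\<in>pcS N ?adj (fst (tailed (V,E) r k)). wt (fst (tailed (V,E) r k)) \<kappa>)
      = (\<Sum>\<kappa>\<in>pcS N ?adj (Inl ` V). wt (Inl ` V) \<kappa> * TT N k (\<kappa> (Inl r)))"
    unfolding fstT by (simp add: TT_def tv_simps)
  also have "\<dots> = (\<Sum>\<kappa>\<in>pcS N E V. wt V \<kappa> * TT N k (\<kappa> r))"
  proof (rule transport)
    show "inj_on Inl V" by simp
    show "r \<in> V" by (rule r)
    fix a b assume "a \<in> V" "b \<in> V"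
    moreover have "\<not> (Inl a = tail_vertex r j \<and> Inl b = tail_vertex r (j+1))" for j
      by (simp add: tail_vertex_def)
    moreover have "\<not> (Inl b = tail_vertex r j \<and> Inl a = tail_vertex r (j+1))" for j
      by (simp add: tail_vertex_def)
    ultimately show "?adj (Inl a) (Inl b) \<longleftrightarrow> E a b"
      unfolding tailed_adj using sym by blast
  qed
  finally show ?thesis .
qed

lemma lollipop_adj:
  "snd (lollipop z h) a b \<longleftrightarrow>
     (a < z \<and> b < z \<and> a \<noteq> b) \<or> (\<exists>i<h. (a = z - 1 + i \<and> b = z + i) \<or> (b = z - 1 + i \<and> a = z + i))"
  unfolding lollipop_def mk_graph_def by auto

lemma lollipop_nbr_path:
  assumes z: "z \<ge> 1" and i: "1 \<le> i"
  shows "(snd (lollipop z h) w (z - 1 + i) \<or> snd (lollipop z h) (z - 1 + i) w) \<longleftrightarrow>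
     (i \<le> h \<and> w = z - 1 + (i - 1)) \<or> (i < h \<and> w = z + i)"
proof -
  have "(snd (lollipop z h) w (z - 1 + i) \<or> snd (lollipop z h) (z - 1 + i) w) \<longleftrightarrow>
     (\<exists>j<h. (w = z - 1 + j \<and> z - 1 + i = z + j) \<or> (z - 1 + i = z - 1 + j \<and> w = z + j))"
    unfolding lollipop_adj using z i by auto
  also have "\<dots> \<longleftrightarrow> (i \<le> h \<and> w = z - 1 + (i - 1)) \<or> (i < h \<and> w = z + i)"
  proof
    assume "\<exists>j<h. (w = z - 1 + j \<and> z - 1 + i = z + j) \<or> (z - 1 + i = z - 1 + j \<and> w = z + j)"
    then obtain j where "j < h" "(w = z - 1 + j \<and> z - 1 + i = z + j) \<or> (z - 1 + i = z - 1 + j \<and> w = z + j)" by blast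
    then show "(i \<le> h \<and> w = z - 1 + (i - 1)) \<or> (i < h \<and> w = z + i)" using z i by auto
  next
    assume "(i \<le> h \<and> w = z - 1 + (i - 1)) \<or> (i < h \<and> w = z + i)"
    then show "\<exists>j<h. (w = z - 1 + j \<and> z - 1 + i = z + j) \<or> (z - 1 + i = z - 1 + j \<and> w = z + j)"
    proof
      assume "i \<le> h \<and> w = z - 1 + (i - 1)"
      then show ?thesis using z i by (intro exI[of _ "i - 1"]) auto
    next
      assume "i < h \<and> w = z + i"
      then show ?thesis using z i by (intro exI[of _ i]) auto
    qed
  qed
  finally show ?thesis .
qed

lemma lollipop_nbr_clique:
  assumes z: "z \<ge> 1" and x: "x < z"
  shows "(snd (lollipop z h) w x \<or> snd (lollipop z h) x w) \<longleftrightarrow>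
     (w < z \<and> w \<noteq> x) \<or> (x = z - 1 \<and> 0 < h \<and> w = z)"
proof -
  have "(snd (lollipop z h) w x \<or> snd (lollipop z h) x w) \<longleftrightarrow>
     (w < z \<and> w \<noteq> x) \<or> (\<exists>j<h. (w = z - 1 + j \<and> x = z + j) \<or> (x = z - 1 + j \<and> w = z + j))"
    unfolding lollipop_adj using x by auto
  also have "\<dots> \<longleftrightarrow> (w < z \<and> w \<noteq> x) \<or> (x = z - 1 \<and> 0 < h \<and> w = z)"
  proof -
    have "(\<exists>j<h. (w = z - 1 + j \<and> x = z + j) \<or> (x = z - 1 + j \<and> w = z + j)) \<longleftrightarrow> (x = z - 1 \<and> 0 < h \<and> w = z)"
    proof
      assume "\<exists>j<h. (w = z - 1 + j \<and> x = z + j) \<or> (x = z - 1 + j \<and> w = z + j)"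
      then obtain j where "j < h" "(w = z - 1 + j \<and> x = z + j) \<or> (x = z - 1 + j \<and> w = z + j)" by blast
      then show "x = z - 1 \<and> 0 < h \<and> w = z" using z x by auto
    next
      assume "x = z - 1 \<and> 0 < h \<and> w = z"
      then show "\<exists>j<h. (w = z - 1 + j \<and> x = z + j) \<or> (x = z - 1 + j \<and> w = z + j)"
        by (intro exI[of _ 0]) auto
    qed
    then show ?thesis by simp
  qed
  finally show ?thesis .
qed

lemma lollipop_P:
  assumes z: "z \<ge> 1"
  shows "(\<Sum>\<kappa>\<in>pcS N (snd (lollipop z h)) (fst (lollipop z h)). wt (fst (lollipop z h)) \<kappa>)
       = (\<Sum>q\<in>{1..N}. xv q * TT N h q * JG N (z - 1) {q} (\<lambda>_. 1))"
proof -
  let ?adj = "snd (lollipop z h)"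
  let ?u = "\<lambda>i. z - 1 + i"
  have fstL: "fst (lollipop z h) = {0..<z} \<union> ?u ` {1..h}"
  proof -
    have "{0..<z+h} = {0..<z} \<union> ?u ` {1..h}"
    proof (intro set_eqI iffI)
      fix x assume "x \<in> {0..<z+h}"
      then show "x \<in> {0..<z} \<union> ?u ` {1..h}"
        using z by (cases "x < z") (auto simp: image_iff intro!: bexI[of _ "x + 1 - z"])
    qed (use z in auto)
    then show ?thesis by (simp add: lollipop_def mk_graph_def)
  qed
  have "(\<Sum>\<kappa>\<in>pcS N ?adj ({0..<z} \<union> ?u ` {1..h}). wt ({0..<z} \<union> ?u ` {1..h}) \<kappa> * (\<lambda>_. 1) (restrict \<kappa> {0..<z}) * (\<lambda>_. 1) (\<kappa> (?u h)))
     = (\<Sum>\<kappa>\<in>pcS N ?adj {0..<z}. wt {0..<z} \<kappa> * (\<lambda>_. 1) \<kappa> * (\<Sum>q\<in>{1..N}. Wk N h (\<kappa> (?u 0)) q * (\<lambda>_. 1) q))"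
  proof (rule path_peel)
    show "finite {0..<z}" by simp
    show "?u 0 \<in> {0..<z}" using z by simp
    show "inj_on ?u {1..h}" by (auto simp: inj_on_def)
    show "?u ` {1..h} \<inter> {0..<z} = {}" using z by auto
  next
    fix i w assume i: "1 \<le> i" "i \<le> h" and w: "w \<in> {0..<z} \<union> ?u ` {1..<i}"
    have "w \<noteq> z + i" using w by auto
    then show "(?adj w (?u i) \<or> ?adj (?u i) w) \<longleftrightarrow> w = ?u (i - 1)"
      using lollipop_nbr_path[OF z i(1), of h w] i by auto
  next
    fix i assume i: "1 \<le> i" "i \<le> h"
    have np: "\<not> ((i \<le> h \<and> z - 1 + i = z - 1 + (i - 1)) \<or> (i < h \<and> z - 1 + i = z + i))" using i z by auto
    show "\<not> ?adj (?u i) (?u i)"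
      using lollipop_nbr_path[OF z i(1), of h "z - 1 + i"] np by blast
  qed
  then have s1: "(\<Sum>\<kappa>\<in>pcS N ?adj (fst (lollipop z h)). wt (fst (lollipop z h)) \<kappa>)
      = (\<Sum>\<kappa>\<in>pcS N ?adj {0..<z}. wt {0..<z} \<kappa> * TT N h (\<kappa> (z - 1)))"
    unfolding fstL by (simp add: TT_def)
  let ?w = "\<lambda>i. i - 1"
  have clq: "{0..<z} = {z - 1} \<union> ?w ` {1..z - 1}"
  proof (intro set_eqI iffI)
    fix x assume "x \<in> {0..<z}"
    then show "x \<in> {z - 1} \<union> ?w ` {1..z - 1}"
      using z by (cases "x = z - 1") (auto simp: image_iff intro!: bexI[of _ "x + 1"])
  qed (use z in auto)
  have "(\<Sum>\<kappa>\<in>pcS N ?adj ({z - 1} \<union> ?w ` {1..z - 1}). wt ({z - 1} \<union> ?w ` {1..z - 1}) \<kappa> * (\<lambda>\<kappa>. TT N h (\<kappa> (z - 1))) (restrict \<kappa> {z - 1}) * (\<lambda>_. 1) (\<kappa> ` ({z - 1} \<union> ?w ` {1..z - 1})))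
     = (\<Sum>\<kappa>\<in>pcS N ?adj {z - 1}. wt {z - 1} \<kappa> * (\<lambda>\<kappa>. TT N h (\<kappa> (z - 1))) \<kappa> * JG N (z - 1) (\<kappa> ` {z - 1}) (\<lambda>_. 1))"
  proof (rule clique_peel)
    show "inj_on ?w {1..z - 1}" by (auto simp: inj_on_def)
    show "?w ` {1..z - 1} \<inter> {z - 1} = {}" by auto
  next
    fix i y assume i: "1 \<le> i" "i \<le> z - 1" and y: "y \<in> {z - 1} \<union> ?w ` {1..<i}"
    have yz: "y < z" "y \<noteq> i - 1" using y i z by auto
    show "(?adj y (?w i) \<or> ?adj (?w i) y) \<longleftrightarrow> y \<in> {z - 1} \<union> ?w ` {1..<i}"
      using lollipop_nbr_clique[OF z, of "i - 1" h y] i y yz by auto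
  next
    fix i assume i: "1 \<le> i" "i \<le> z - 1"
    show "\<not> ?adj (?w i) (?w i)"
      using lollipop_nbr_clique[OF z, of "i - 1" h "i - 1"] i by auto
  qed auto
  then have s2: "(\<Sum>\<kappa>\<in>pcS N ?adj {0..<z}. wt {0..<z} \<kappa> * TT N h (\<kappa> (z - 1)))
      = (\<Sum>\<kappa>\<in>pcS N ?adj {z - 1}. wt {z - 1} \<kappa> * (TT N h (\<kappa> (z - 1)) * JG N (z - 1) {\<kappa> (z - 1)} (\<lambda>_. 1)))"
    unfolding clq[symmetric] by (simp add: mult.assoc)
  have s3: "\<dots> = (\<Sum>q\<in>{1..N}. xv q * (TT N h q * JG N (z - 1) {q} (\<lambda>_. 1)))"
    by (rule single_sum) (use lollipop_nbr_clique[OF z, of "z - 1" h "z - 1"] z in auto)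
  show ?thesis using s1 s2 s3 by (simp add: mult.assoc)
qed




definition KE :: "'a set \<Rightarrow> ('a \<Rightarrow> 'a \<Rightarrow> bool) \<Rightarrow> 'a \<Rightarrow> nat \<Rightarrow> nat \<Rightarrow> nat \<Rightarrow> ('a + nat \<times> nat) \<Rightarrow> ('a + nat \<times> nat) \<Rightarrow> bool" where
  "KE V E r m g h a b \<longleftrightarrow>
     (\<exists>u v. a = Inl u \<and> b = Inl v \<and> u \<in> V \<and> v \<in> V \<and> E u v) \<or>
     (\<exists>i<g. a = Kgh_path r g i \<and> b = Kgh_path r g (i+1)) \<or>
     (a \<in> Kgh_clique r g m \<and> b \<in> Kgh_clique r g m \<and> a \<noteq> b) \<or>
     (0 < h \<and> a = Inr (1,1) \<and> b = Inr (2,1)) \<or>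
     (\<exists>i. 1 \<le> i \<and> i < h \<and> a = Inr (2,i) \<and> b = Inr (2,i+1))"

lemma Kgh_adj: "snd (Kgh (V,E) r m g h) a b \<longleftrightarrow> KE V E r m g h a b \<or> KE V E r m g h b a"
proof -
  have e: "snd (Kgh (V,E) r m g h) a b \<longleftrightarrow> (a, b) \<in> ({(Inl u, Inl v) | u v. u \<in> V \<and> v \<in> V \<and> E u v} \<union>
      {(Kgh_path r g i, Kgh_path r g (i+1)) | i. i < g} \<union>
      {(u, v) | u v. u \<in> Kgh_clique r g m \<and> v \<in> Kgh_clique r g m \<and> u \<noteq> v} \<union>
      {(Inr (1, 1), Kgh_tail 1) | _::unit. 0 < h} \<union>
      {(Kgh_tail i, Kgh_tail (i+1)) | i. 1 \<le> i \<and> i < h}) \<or> (b, a) \<in> ({(Inl u, Inl v) | u v. u \<in> V \<and> v \<in> V \<and> E u v} \<union>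
      {(Kgh_path r g i, Kgh_path r g (i+1)) | i. i < g} \<union>
      {(u, v) | u v. u \<in> Kgh_clique r g m \<and> v \<in> Kgh_clique r g m \<and> u \<noteq> v} \<union>
      {(Inr (1, 1), Kgh_tail 1) | _::unit. 0 < h} \<union>
      {(Kgh_tail i, Kgh_tail (i+1)) | i. 1 \<le> i \<and> i < h})"
    unfolding Kgh_def mk_graph_def by simp
  have f: "(x, y) \<in> ({(Inl u, Inl v) | u v. u \<in> V \<and> v \<in> V \<and> E u v} \<union>
      {(Kgh_path r g i, Kgh_path r g (i+1)) | i. i < g} \<union>
      {(u, v) | u v. u \<in> Kgh_clique r g m \<and> v \<in> Kgh_clique r g m \<and> u \<noteq> v} \<union>
      {(Inr (1, 1), Kgh_tail 1) | _::unit. 0 < h} \<union>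
      {(Kgh_tail i, Kgh_tail (i+1)) | i. 1 \<le> i \<and> i < h}) \<longleftrightarrow> KE V E r m g h x y" for x y
    unfolding KE_def Kgh_tail_def by blast
  show ?thesis unfolding e f ..
qed

lemma path_ne_Inr2 [simp]: "Kgh_path r g i \<noteq> Inr (2, j)" "Inr (2, j) \<noteq> Kgh_path r g i"
  by (auto simp: Kgh_path_def Kgh_x_def)

lemma clique_no2 [simp]: "Inr (2, j) \<notin> Kgh_clique r g m"
  by (auto simp: Kgh_clique_def Kgh_x_def)

lemma N1:
  assumes "1 \<le> i" "i \<le> h"
  shows "(snd (Kgh (V,E) r m g h) w (Inr (2,i)) \<or> snd (Kgh (V,E) r m g h) (Inr (2,i)) w) \<longleftrightarrow>
     (i = 1 \<and> w = Inr (1,1)) \<or> (1 < i \<and> w = Inr (2, i - 1)) \<or> (i < h \<and> w = Inr (2, i + 1))"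
proof -
  have a: "KE V E r m g h w (Inr (2,i)) \<longleftrightarrow> (i = 1 \<and> w = Inr (1,1)) \<or> (1 < i \<and> w = Inr (2, i - 1))"
    unfolding KE_def using assms by auto
  have b: "KE V E r m g h (Inr (2,i)) w \<longleftrightarrow> (i < h \<and> w = Inr (2, i + 1))"
    unfolding KE_def using assms by auto
  show ?thesis unfolding Kgh_adj a b by blast
qed


lemma path_ne_Inr1S [simp]: "Kgh_path r g i \<noteq> Inr (1, Suc j)" "Inr (1, Suc j) \<noteq> Kgh_path r g i"
  by (auto simp: Kgh_path_def Kgh_x_def)

lemma path_ne_Inr1S' [simp]: "Kgh_path r g i \<noteq> Inr (Suc 0, Suc j)" "Inr (Suc 0, Suc j) \<noteq> Kgh_path r g i"
  by (auto simp: Kgh_path_def Kgh_x_def)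

lemma x_neS' [simp]: "Kgh_x r g \<noteq> Inr (Suc 0, Suc j)" "Inr (Suc 0, Suc j) \<noteq> Kgh_x r g"
  by (auto simp: Kgh_x_def)

lemma x_neS [simp]: "Kgh_x r g \<noteq> Inr (1, Suc j)" "Inr (1, Suc j) \<noteq> Kgh_x r g"
  by (auto simp: Kgh_x_def)

lemma Inr1_clique: "Inr (1, j) \<in> Kgh_clique r g m \<longleftrightarrow> (1 \<le> j \<and> j < m) \<or> (j = 0 \<and> 0 < g)"
  by (auto simp: Kgh_clique_def Kgh_x_def)

lemma N2:
  assumes "2 \<le> j" "j < m"
  shows "(snd (Kgh (V,E) r m g h) w (Inr (1,j)) \<or> snd (Kgh (V,E) r m g h) (Inr (1,j)) w) \<longleftrightarrow>
     w \<in> Kgh_clique r g m \<and> w \<noteq> Inr (1,j)"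
proof -
  obtain j' where j': "j = Suc j'" using assms by (cases j) auto
  have c: "Inr (1,j) \<in> Kgh_clique r g m" unfolding Kgh_clique_def using assms by auto
  have a: "KE V E r m g h w (Inr (1,j)) \<longleftrightarrow> w \<in> Kgh_clique r g m \<and> w \<noteq> Inr (1,j)"
    unfolding KE_def using assms c unfolding j' by auto
  have b: "KE V E r m g h (Inr (1,j)) w \<longleftrightarrow> w \<in> Kgh_clique r g m \<and> w \<noteq> Inr (1,j)"
    unfolding KE_def using assms c unfolding j' by auto
  show ?thesis unfolding Kgh_adj a b by blast
qed

lemma N3:
  assumes "2 \<le> m"
  shows "(snd (Kgh (V,E) r m g h) w (Inr (1,1)) \<or> snd (Kgh (V,E) r m g h) (Inr (1,1)) w) \<longleftrightarrow>
     (w \<in> Kgh_clique r g m \<and> w \<noteq> Inr (1,1)) \<or> (0 < h \<and> w = Inr (2,1))"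
proof -
  have c: "Inr (1,1) \<in> Kgh_clique r g m" unfolding Kgh_clique_def using assms by auto
  have a: "KE V E r m g h w (Inr (1,1)) \<longleftrightarrow> w \<in> Kgh_clique r g m \<and> w \<noteq> Inr (1,1)"
    unfolding KE_def using assms c by auto
  have b: "KE V E r m g h (Inr (1,1)) w \<longleftrightarrow> (w \<in> Kgh_clique r g m \<and> w \<noteq> Inr (1,1)) \<or> (0 < h \<and> w = Inr (2,1))"
    unfolding KE_def using assms c by auto
  show ?thesis unfolding Kgh_adj using a b by blast
qed

lemma path_inj: "i \<le> g \<Longrightarrow> j \<le> g \<Longrightarrow> Kgh_path r g i = Kgh_path r g j \<longleftrightarrow> i = j"
  by (auto simp: Kgh_path_def Kgh_x_def split: if_splits)

lemma path_clique: "1 \<le> i \<Longrightarrow> i \<le> g \<Longrightarrow> Kgh_path r g i \<in> Kgh_clique r g m \<longleftrightarrow> i = g"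
  by (auto simp: Kgh_path_def Kgh_x_def Kgh_clique_def)

lemma path_not_Inl: "1 \<le> i \<Longrightarrow> i \<le> g \<Longrightarrow> Kgh_path r g i \<noteq> Inl a"
  by (auto simp: Kgh_path_def Kgh_x_def)

lemma N4:
  assumes i: "1 \<le> i" "i \<le> g"
  shows "(snd (Kgh (V,E) r m g h) w (Kgh_path r g i) \<or> snd (Kgh (V,E) r m g h) (Kgh_path r g i) w) \<longleftrightarrow>
     w = Kgh_path r g (i - 1) \<or> (i < g \<and> w = Kgh_path r g (i + 1)) \<or> (i = g \<and> w \<in> Kgh_clique r g m \<and> w \<noteq> Kgh_path r g i)"
proof -
  have pc: "Kgh_path r g i \<in> Kgh_clique r g m \<longleftrightarrow> i = g" using path_clique[OF i] .
  have n1: "Kgh_path r g i \<noteq> Inr (1, 1)" "Kgh_path r g i \<noteq> Inr (2, k)" for k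
    using path_ne_Inr1S(1)[of r g i 0] by auto
  have a: "KE V E r m g h w (Kgh_path r g i) \<longleftrightarrow> w = Kgh_path r g (i - 1) \<or> (i = g \<and> w \<in> Kgh_clique r g m \<and> w \<noteq> Kgh_path r g i)"
  proof -
    have p: "(\<exists>j<g. w = Kgh_path r g j \<and> Kgh_path r g i = Kgh_path r g (j+1)) \<longleftrightarrow> w = Kgh_path r g (i - 1)"
    proof
      assume "\<exists>j<g. w = Kgh_path r g j \<and> Kgh_path r g i = Kgh_path r g (j+1)"
      then obtain j where "j < g" "w = Kgh_path r g j" "Kgh_path r g i = Kgh_path r g (j+1)" by blast
      then show "w = Kgh_path r g (i - 1)" using path_inj[of i g "j+1" r] i by auto
    next
      assume "w = Kgh_path r g (i - 1)"
      then show "\<exists>j<g. w = Kgh_path r g j \<and> Kgh_path r g i = Kgh_path r g (j+1)"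
        using i by (intro exI[of _ "i - 1"]) auto
    qed
    have g: "\<not> (\<exists>u v. w = Inl u \<and> Kgh_path r g i = Inl v \<and> u \<in> V \<and> v \<in> V \<and> E u v)"
      using path_not_Inl[OF i, of r] by blast
    show ?thesis unfolding KE_def using p g pc n1 by auto
  qed
  have b: "KE V E r m g h (Kgh_path r g i) w \<longleftrightarrow> (i < g \<and> w = Kgh_path r g (i + 1)) \<or> (i = g \<and> w \<in> Kgh_clique r g m \<and> w \<noteq> Kgh_path r g i)"
  proof -
    have p: "(\<exists>j<g. Kgh_path r g i = Kgh_path r g j \<and> w = Kgh_path r g (j+1)) \<longleftrightarrow> (i < g \<and> w = Kgh_path r g (i + 1))"
    proof
      assume "\<exists>j<g. Kgh_path r g i = Kgh_path r g j \<and> w = Kgh_path r g (j+1)"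
      then obtain j where "j < g" "Kgh_path r g i = Kgh_path r g j" "w = Kgh_path r g (j+1)" by blast
      then show "i < g \<and> w = Kgh_path r g (i + 1)" using path_inj[of i g j r] i by auto
    qed auto
    have g: "\<not> (\<exists>u v. Kgh_path r g i = Inl u \<and> w = Inl v \<and> u \<in> V \<and> v \<in> V \<and> E u v)"
      using path_not_Inl[OF i, of r] by blast
    show ?thesis unfolding KE_def using p g pc n1 by auto
  qed
  show ?thesis unfolding Kgh_adj a b by blast
qed

lemma N5:
  shows "snd (Kgh (V,E) r m g h) (Inl a) (Inl b) \<longleftrightarrow> (a \<in> V \<and> b \<in> V \<and> (E a b \<or> E b a))"
proof -
  have p: "\<not> (\<exists>j<g. Inl x = Kgh_path r g j \<and> Inl y = Kgh_path r g (j+1))" for x y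
    using path_not_Inl[of "Suc _" g r] by (metis Suc_eq_plus1 Suc_leI le_add2 plus_1_eq_Suc)
  have c: "\<not> (Inl x \<in> Kgh_clique r g m \<and> Inl y \<in> Kgh_clique r g m \<and> (Inl x :: 'a + nat \<times> nat) \<noteq> Inl y)" for x y
    by (auto simp: Kgh_clique_def Kgh_x_def split: if_splits)
  have "KE V E r m g h (Inl a) (Inl b) \<longleftrightarrow> a \<in> V \<and> b \<in> V \<and> E a b"
    unfolding KE_def using p c by auto
  moreover have "KE V E r m g h (Inl b) (Inl a) \<longleftrightarrow> a \<in> V \<and> b \<in> V \<and> E b a"
    unfolding KE_def using p c by auto
  ultimately show ?thesis unfolding Kgh_adj by blast
qed


definition PhiK :: "nat \<Rightarrow> nat \<Rightarrow> nat \<Rightarrow> nat \<Rightarrow> pl" where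
  "PhiK N h m s = (\<Sum>q\<in>{1..N} - {s}. xv q * TT N h q * JG N (m - 2) {s, q} (\<lambda>_. 1))"

lemma Kgh_P:
  fixes V :: "'a set"
  assumes fin: "finite V" and r: "r \<in> V" and sym: "\<And>u v. E u v \<Longrightarrow> E v u" and m: "m \<ge> 2"
  shows "(\<Sum>\<kappa>\<in>pcS N (snd (Kgh (V,E) r m g h)) (fst (Kgh (V,E) r m g h)). wt (fst (Kgh (V,E) r m g h)) \<kappa>)
       = (\<Sum>\<kappa>\<in>pcS N E V. wt V \<kappa> * (\<Sum>s\<in>{1..N}. Wk N g (\<kappa> r) s * PhiK N h m s))"
proof -
  let ?adj = "snd (Kgh (V,E) r m g h)"
  define X where "X = Kgh_x r g"
  define Y :: "'a + nat \<times> nat" where "Y = Inr (1,1)"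
  define PATH where "PATH = Kgh_path r g ` {1..g}"
  define B3 where "B3 = Inl ` V \<union> PATH"
  define B2 where "B2 = insert Y B3"
  define fw :: "nat \<Rightarrow> 'a + nat \<times> nat" where "fw i = Inr (1, i + 1)" for i
  define B1 where "B1 = B2 \<union> fw ` {1..m - 2}"
  define tu :: "nat \<Rightarrow> 'a + nat \<times> nat" where "tu i = (if i = 0 then Y else Inr (2, i))" for i
  have XB3: "X \<in> B3"
  proof (cases "g = 0")
    case True then show ?thesis using r by (simp add: X_def B3_def Kgh_x_def)
  next
    case False
    then have "Kgh_path r g g = X" by (simp add: X_def Kgh_path_def)
    then show ?thesis using False by (auto simp: B3_def PATH_def)
  qed
  have finB3: "finite B3" using fin by (simp add: B3_def PATH_def)
  have YB3: "Y \<notin> B3" by (auto simp: Y_def B3_def PATH_def)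
  have Xcl: "X \<in> Kgh_clique r g m" by (simp add: X_def Kgh_clique_def)
  have cl: "Kgh_clique r g m = insert X (insert Y (fw ` {1..m - 2}))"
  proof -
    have "{Inr (1, j) | j. 1 \<le> j \<and> j < m} = insert Y (fw ` {1..m - 2})"
    proof (intro set_eqI iffI)
      fix x :: "'a + nat \<times> nat" assume "x \<in> {Inr (1, j) | j. 1 \<le> j \<and> j < m}"
      then obtain j where j: "1 \<le> j" "j < m" "x = Inr (1, j)" by blast
      show "x \<in> insert Y (fw ` {1..m - 2})"
      proof (cases "j = 1")
        case True then show ?thesis using j by (simp add: Y_def)
      next
        case False
        then have "x = fw (j - 1)" "j - 1 \<in> {1..m - 2}" using j by (auto simp: fw_def)
        then show ?thesis by blast
      qed
    next
      fix x :: "'a + nat \<times> nat" assume "x \<in> insert Y (fw ` {1..m - 2})"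
      then show "x \<in> {Inr (1, j) | j. 1 \<le> j \<and> j < m}" using m by (auto simp: Y_def fw_def)
    qed
    then show ?thesis by (simp add: Kgh_clique_def X_def)
  qed
  have fstK: "fst (Kgh (V,E) r m g h) = B1 \<union> tu ` {1..h}"
  proof -
    have p0: "Kgh_path r g ` {0..g} = insert (Inl r) PATH"
    proof -
      have "{0..g} = insert 0 {1..g}" by auto
      then have "Kgh_path r g ` {0..g} = insert (Kgh_path r g 0) PATH" by (simp add: PATH_def)
      moreover have "Kgh_path r g 0 = Inl r" by (simp add: Kgh_path_def)
      ultimately show ?thesis by simp
    qed
    have t: "tu ` {1..h} = Kgh_tail ` {1..h}" by (rule image_cong) (auto simp: tu_def Kgh_tail_def)
    show ?thesis
      unfolding Kgh_def mk_graph_def fst_conv p0 cl t B1_def B2_def B3_def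
      using XB3 r by (auto simp: B3_def)
  qed
  have s1: "(\<Sum>\<kappa>\<in>pcS N ?adj (B1 \<union> tu ` {1..h}). wt (B1 \<union> tu ` {1..h}) \<kappa> * (\<lambda>_. 1) (restrict \<kappa> B1) * (\<lambda>_. 1) (\<kappa> (tu h)))
     = (\<Sum>\<kappa>\<in>pcS N ?adj B1. wt B1 \<kappa> * (\<lambda>_. 1) \<kappa> * (\<Sum>q\<in>{1..N}. Wk N h (\<kappa> (tu 0)) q * (\<lambda>_. 1) q))"
  proof (rule path_peel)
    show "finite B1" using finB3 by (simp add: B1_def B2_def)
    show "tu 0 \<in> B1" by (simp add: tu_def B1_def B2_def)
    show "inj_on tu {1..h}" by (rule inj_onI) (simp add: tu_def)
    show "tu ` {1..h} \<inter> B1 = {}"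
      by (auto simp: tu_def B1_def B2_def B3_def PATH_def Y_def fw_def)
  next
    fix i w assume i: "1 \<le> i" "i \<le> h" and w: "w \<in> B1 \<union> tu ` {1..<i}"
    have e: "tu i = Inr (2, i)" using i by (simp add: tu_def)
    have wn: "w \<noteq> Inr (2, i + 1)" using w by (auto simp: tu_def B1_def B2_def B3_def PATH_def Y_def fw_def)
    have "tu (i - 1) = (if i = 1 then Inr (1,1) else Inr (2, i - 1))" using i by (simp add: tu_def Y_def)
    then show "(?adj w (tu i) \<or> ?adj (tu i) w) \<longleftrightarrow> w = tu (i - 1)"
      unfolding e using N1[OF i, of V E r m g w] wn i by auto
  next
    fix i assume i: "1 \<le> i" "i \<le> h"
    have e: "tu i = Inr (2, i)" using i by (simp add: tu_def)
    show "\<not> ?adj (tu i) (tu i)" unfolding e using N1[OF i, of V E r m g "Inr (2,i)"] by auto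
  qed
  have s1': "(\<Sum>\<kappa>\<in>pcS N ?adj (fst (Kgh (V,E) r m g h)). wt (fst (Kgh (V,E) r m g h)) \<kappa>)
     = (\<Sum>\<kappa>\<in>pcS N ?adj B1. wt B1 \<kappa> * TT N h (\<kappa> Y))"
    using s1 unfolding fstK by (simp add: TT_def tu_def)
  have s2: "(\<Sum>\<kappa>\<in>pcS N ?adj (B2 \<union> fw ` {1..m - 2}). wt (B2 \<union> fw ` {1..m - 2}) \<kappa> * (\<lambda>\<kappa>. TT N h (\<kappa> Y)) (restrict \<kappa> B2) * (\<lambda>_. 1) (\<kappa> ` ({X, Y} \<union> fw ` {1..m - 2})))
     = (\<Sum>\<kappa>\<in>pcS N ?adj B2. wt B2 \<kappa> * (\<lambda>\<kappa>. TT N h (\<kappa> Y)) \<kappa> * JG N (m - 2) (\<kappa> ` {X, Y}) (\<lambda>_. 1))"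
  proof (rule clique_peel)
    show "finite B2" using finB3 by (simp add: B2_def)
    show "{X, Y} \<subseteq> B2" using XB3 by (simp add: B2_def)
    show "inj_on fw {1..m - 2}" by (rule inj_onI) (simp add: fw_def)
    show "fw ` {1..m - 2} \<inter> B2 = {}"
      by (auto simp: fw_def B2_def B3_def PATH_def Y_def)
  next
    fix i y assume i: "1 \<le> i" "i \<le> m - 2" and y: "y \<in> B2 \<union> fw ` {1..<i}"
    have j: "2 \<le> i + 1" "i + 1 < m" using i m by auto
    have "y \<in> Kgh_clique r g m \<and> y \<noteq> Inr (1, i + 1) \<longleftrightarrow> y \<in> {X, Y} \<union> fw ` {1..<i}"
    proof
      assume a: "y \<in> Kgh_clique r g m \<and> y \<noteq> Inr (1, i + 1)"
      then have "y = X \<or> y = Y \<or> y \<in> fw ` {1..m - 2}" using cl by auto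
      moreover have "y \<notin> fw ` {1..m - 2} - fw ` {1..<i}"
      proof
        assume b: "y \<in> fw ` {1..m - 2} - fw ` {1..<i}"
        then have "y \<notin> B2" by (auto simp: fw_def B2_def B3_def PATH_def Y_def)
        then have "y \<in> fw ` {1..<i}" using y by auto
        then show False using b by auto
      qed
      ultimately show "y \<in> {X, Y} \<union> fw ` {1..<i}" by blast
    next
      assume "y \<in> {X, Y} \<union> fw ` {1..<i}"
      then show "y \<in> Kgh_clique r g m \<and> y \<noteq> Inr (1, i + 1)"
        using cl i by (auto simp: X_def Y_def fw_def)
    qed
    then show "(?adj y (fw i) \<or> ?adj (fw i) y) \<longleftrightarrow> y \<in> {X, Y} \<union> fw ` {1..<i}"
      using N2[OF j, of V E r g h y] by (simp add: fw_def)
  next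
    fix i assume i: "1 \<le> i" "i \<le> m - 2"
    have j: "2 \<le> i + 1" "i + 1 < m" using i m by auto
    show "\<not> ?adj (fw i) (fw i)" using N2[OF j, of V E r g h "fw i"] by (simp add: fw_def)
  qed
  have s2': "(\<Sum>\<kappa>\<in>pcS N ?adj B1. wt B1 \<kappa> * TT N h (\<kappa> Y))
     = (\<Sum>\<kappa>\<in>pcS N ?adj (insert Y B3). wt (insert Y B3) \<kappa> * (\<lambda>\<kappa>' q. TT N h q * JG N (m - 2) {\<kappa>' X, q} (\<lambda>_. 1)) (restrict \<kappa> B3) (\<kappa> Y))"
  proof -
    have "(\<Sum>\<kappa>\<in>pcS N ?adj B1. wt B1 \<kappa> * TT N h (\<kappa> Y)) = (\<Sum>\<kappa>\<in>pcS N ?adj B2. wt B2 \<kappa> * TT N h (\<kappa> Y) * JG N (m - 2) (\<kappa> ` {X, Y}) (\<lambda>_. 1))"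
      using s2 unfolding B1_def by (simp add: B2_def)
    also have "\<dots> = (\<Sum>\<kappa>\<in>pcS N ?adj (insert Y B3). wt (insert Y B3) \<kappa> * (\<lambda>\<kappa>' q. TT N h q * JG N (m - 2) {\<kappa>' X, q} (\<lambda>_. 1)) (restrict \<kappa> B3) (\<kappa> Y))"
      unfolding B2_def using XB3 by (intro sum.cong refl) (simp add: mult.assoc)
    finally show ?thesis .
  qed
  have s3: "(\<Sum>\<kappa>\<in>pcS N ?adj (insert Y B3). wt (insert Y B3) \<kappa> * (\<lambda>\<kappa>' q. TT N h q * JG N (m - 2) {\<kappa>' X, q} (\<lambda>_. 1)) (restrict \<kappa> B3) (\<kappa> Y))
     = (\<Sum>\<kappa>\<in>pcS N ?adj B3. wt B3 \<kappa> * (\<Sum>q\<in>{1..N} - \<kappa> ` {X}. xv q * (\<lambda>\<kappa>' q. TT N h q * JG N (m - 2) {\<kappa>' X, q} (\<lambda>_. 1)) \<kappa> q))"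
  proof (rule peel)
    show "finite B3" by (rule finB3)
    show "Y \<notin> B3" by (rule YB3)
    show "\<not> ?adj Y Y" using N3[OF m, of V E r g h Y] by (simp add: Y_def)
    show "{X} \<subseteq> B3" using XB3 by simp
    fix u assume u: "u \<in> B3"
    have "u \<in> Kgh_clique r g m \<and> u \<noteq> Inr (1,1) \<longleftrightarrow> u = X"
    proof
      assume "u \<in> Kgh_clique r g m \<and> u \<noteq> Inr (1,1)"
      moreover have "u \<notin> fw ` {1..m - 2}" using u by (auto simp: fw_def B3_def PATH_def)
      ultimately show "u = X" using cl by (auto simp: Y_def)
    next
      assume "u = X" then show "u \<in> Kgh_clique r g m \<and> u \<noteq> Inr (1,1)" using Xcl by (simp add: X_def Kgh_x_def)
    qed
    moreover have "u \<noteq> Inr (2,1)" using u by (auto simp: B3_def PATH_def)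
    ultimately show "(?adj u Y \<or> ?adj Y u) \<longleftrightarrow> u \<in> {X}"
      using N3[OF m, of V E r g h u] by (auto simp: Y_def)
  qed
  have s3': "(\<Sum>\<kappa>\<in>pcS N ?adj B3. wt B3 \<kappa> * (\<Sum>q\<in>{1..N} - \<kappa> ` {X}. xv q * (\<lambda>\<kappa>' q. TT N h q * JG N (m - 2) {\<kappa>' X, q} (\<lambda>_. 1)) \<kappa> q))
     = (\<Sum>\<kappa>\<in>pcS N ?adj (Inl ` V \<union> Kgh_path r g ` {1..g}). wt (Inl ` V \<union> Kgh_path r g ` {1..g}) \<kappa> * (\<lambda>_. 1) (restrict \<kappa> (Inl ` V)) * PhiK N h m (\<kappa> (Kgh_path r g g)))"
  proof -
    have "Kgh_path r g g = X" by (simp add: X_def Kgh_path_def Kgh_x_def)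
    then show ?thesis unfolding B3_def PATH_def PhiK_def by (simp add: mult.assoc)
  qed
  have s4: "(\<Sum>\<kappa>\<in>pcS N ?adj (Inl ` V \<union> Kgh_path r g ` {1..g}). wt (Inl ` V \<union> Kgh_path r g ` {1..g}) \<kappa> * (\<lambda>_. 1) (restrict \<kappa> (Inl ` V)) * PhiK N h m (\<kappa> (Kgh_path r g g)))
     = (\<Sum>\<kappa>\<in>pcS N ?adj (Inl ` V). wt (Inl ` V) \<kappa> * (\<lambda>_. 1) \<kappa> * (\<Sum>q\<in>{1..N}. Wk N g (\<kappa> (Kgh_path r g 0)) q * PhiK N h m q))"
  proof (rule path_peel)
    show "finite (Inl ` V)" using fin by simp
    show "Kgh_path r g 0 \<in> Inl ` V" using r by (simp add: Kgh_path_def)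
    show "inj_on (Kgh_path r g) {1..g}" by (rule inj_onI) (simp add: path_inj)
    show "Kgh_path r g ` {1..g} \<inter> Inl ` V = {}" using path_not_Inl by fastforce
  next
    fix i w assume i: "1 \<le> i" "i \<le> g" and w: "w \<in> Inl ` V \<union> Kgh_path r g ` {1..<i}"
    have n1: "\<not> (i < g \<and> w = Kgh_path r g (i + 1))"
    proof
      assume a: "i < g \<and> w = Kgh_path r g (i + 1)"
      show False
      proof (cases "w \<in> Inl ` V")
        case True then show False using a path_not_Inl[of "i + 1" g r] by auto
      next
        case False
        then obtain j where "j \<in> {1..<i}" "w = Kgh_path r g j" using w by auto
        then show False using a path_inj[of j g "i + 1" r] by auto
      qed
    qed
    have n2: "\<not> (i = g \<and> w \<in> Kgh_clique r g m \<and> w \<noteq> Kgh_path r g i)"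
    proof
      assume a: "i = g \<and> w \<in> Kgh_clique r g m \<and> w \<noteq> Kgh_path r g i"
      show False
      proof (cases "w \<in> Inl ` V")
        case True then show False using a i by (auto simp: Kgh_clique_def Kgh_x_def)
      next
        case False
        then obtain j where "j \<in> {1..<i}" "w = Kgh_path r g j" using w by auto
        then show False using a path_clique[of j g r m] by auto
      qed
    qed
    show "(?adj w (Kgh_path r g i) \<or> ?adj (Kgh_path r g i) w) \<longleftrightarrow> w = Kgh_path r g (i - 1)"
      using N4[OF i, of V E r m h w] n1 n2 by blast
  next
    fix i assume i: "1 \<le> i" "i \<le> g"
    have "Kgh_path r g i \<noteq> Kgh_path r g (i - 1)" using path_inj[of i g "i - 1" r] i by auto
    moreover have "\<not> (i < g \<and> Kgh_path r g i = Kgh_path r g (i + 1))" using path_inj[of i g "i + 1" r] i by auto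
    ultimately show "\<not> ?adj (Kgh_path r g i) (Kgh_path r g i)"
      using N4[OF i, of V E r m h "Kgh_path r g i"] by blast
  qed
  have s5: "(\<Sum>\<kappa>\<in>pcS N ?adj (Inl ` V). wt (Inl ` V) \<kappa> * (\<lambda>p. \<Sum>q\<in>{1..N}. Wk N g p q * PhiK N h m q) (\<kappa> (Inl r)))
     = (\<Sum>\<kappa>\<in>pcS N E V. wt V \<kappa> * (\<lambda>p. \<Sum>q\<in>{1..N}. Wk N g p q * PhiK N h m q) (\<kappa> r))"
  proof (rule transport)
    show "inj_on Inl V" by simp
    show "r \<in> V" by (rule r)
    fix a b assume "a \<in> V" "b \<in> V"
    then show "?adj (Inl a) (Inl b) \<longleftrightarrow> E a b" using N5[of V E r m g h a b] sym by blast
  qed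
  show ?thesis
    using s1' s2' s3 s3' s4 s5 by (simp add: Kgh_path_def)
qed




definition LL :: "nat \<Rightarrow> nat \<Rightarrow> nat \<Rightarrow> pl" where
  "LL N h z = (\<Sum>q\<in>{1..N}. xv q * TT N h q * EE ({1..N} - {q}) $ (z - 1))"

lemma PhiK_eq:
  assumes s: "s \<in> {1..N}" and m: "m \<ge> 2"
  shows "PhiK N h m s = of_nat (fact (m - 2)) *
     ((\<Sum>z=1..m-1. of_nat z * EE {1..N} $ (m - 1 - z) * TT N (h + z) s)
      - of_nat (m - 2) * (\<Sum>z=1..m-1. LL N h z * TT N (m - 1 - z) s))"
proof -
  let ?C = "{1..N::nat}"
  let ?c = "m - 2"
  have c1: "?c + 1 = m - 1" using m by simp
  have TTz: "TT N (h + z) s = (\<Sum>q\<in>?C. xv q * VV N (z - 1) s q * TT N h q)" if "1 \<le> z" for z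
  proof -
    have "TT N (z + h) s = (\<Sum>q\<in>?C. Wk N z s q * TT N h q)" by (rule TT_concat)
    moreover have "Wk N z s q = xv q * VV N (z - 1) s q" for q
      using that by (cases z) (simp_all add: VV_def)
    ultimately show ?thesis by (simp add: add.commute)
  qed
  have "(\<Sum>z=1..m-1. of_nat z * EE ?C $ (m - 1 - z) * TT N (h + z) s)
      - of_nat ?c * (\<Sum>z=1..m-1. LL N h z * TT N (m - 1 - z) s)
      = (\<Sum>q\<in>?C. xv q * TT N h q * ((\<Sum>z=1..?c+1. of_nat z * EE ?C $ (?c+1-z) * VV N (z-1) s q)
          - of_nat ?c * (\<Sum>z=1..?c+1. EE (?C - {q}) $ (z-1) * TT N (?c+1-z) s)))"
  proof -
    have a: "(\<Sum>z=1..m-1. of_nat z * EE ?C $ (m - 1 - z) * TT N (h + z) s)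
        = (\<Sum>q\<in>?C. xv q * TT N h q * (\<Sum>z=1..?c+1. of_nat z * EE ?C $ (?c+1-z) * VV N (z-1) s q))"
    proof -
      have "(\<Sum>z=1..m-1. of_nat z * EE ?C $ (m - 1 - z) * TT N (h + z) s)
          = (\<Sum>z=1..m-1. \<Sum>q\<in>?C. xv q * TT N h q * (of_nat z * EE ?C $ (m - 1 - z) * VV N (z-1) s q))"
      proof (intro sum.cong refl)
        fix z assume "z \<in> {1..m-1}"
        then have z: "1 \<le> z" by simp
        show "of_nat z * EE ?C $ (m - 1 - z) * TT N (h + z) s
           = (\<Sum>q\<in>?C. xv q * TT N h q * (of_nat z * EE ?C $ (m - 1 - z) * VV N (z-1) s q))"
          by (simp only: TTz[OF z]) (simp add: sum_distrib_left sum_distrib_right algebra_simps)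
      qed
      also have "\<dots> = (\<Sum>q\<in>?C. \<Sum>z=1..m-1. xv q * TT N h q * (of_nat z * EE ?C $ (m - 1 - z) * VV N (z-1) s q))"
        by (rule sum.swap)
      finally show ?thesis unfolding c1 by (simp add: sum_distrib_left)
    qed
    have b: "(\<Sum>z=1..m-1. LL N h z * TT N (m - 1 - z) s)
        = (\<Sum>q\<in>?C. xv q * TT N h q * (\<Sum>z=1..?c+1. EE (?C - {q}) $ (z-1) * TT N (?c+1-z) s))"
    proof -
      have "(\<Sum>z=1..m-1. LL N h z * TT N (m - 1 - z) s)
          = (\<Sum>z=1..m-1. \<Sum>q\<in>?C. xv q * TT N h q * (EE (?C - {q}) $ (z-1) * TT N (m - 1 - z) s))"
        unfolding LL_def by (intro sum.cong refl) (simp add: sum_distrib_right sum_distrib_left mult_ac)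
      also have "\<dots> = (\<Sum>q\<in>?C. \<Sum>z=1..m-1. xv q * TT N h q * (EE (?C - {q}) $ (z-1) * TT N (m - 1 - z) s))"
        by (rule sum.swap)
      finally show ?thesis unfolding c1 by (simp add: sum_distrib_left)
    qed
    show ?thesis unfolding a b
      by (simp add: sum_distrib_left sum_subtractf algebra_simps)
  qed
  also have "\<dots> = (\<Sum>q\<in>?C. xv q * TT N h q * (if q \<noteq> s then EE (?C - {s} - {q}) $ ?c else 0))"
    using star[OF s] by (intro sum.cong refl) simp
  also have "\<dots> = (\<Sum>q\<in>?C - {s}. xv q * TT N h q * EE (?C - {s} - {q}) $ ?c)"
    by (rule sum.mono_neutral_cong_right) auto
  finally have e: "(\<Sum>z=1..m-1. of_nat z * EE ?C $ (m - 1 - z) * TT N (h + z) s)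
      - of_nat ?c * (\<Sum>z=1..m-1. LL N h z * TT N (m - 1 - z) s)
      = (\<Sum>q\<in>?C - {s}. xv q * TT N h q * EE (?C - {s} - {q}) $ ?c)" .
  have "PhiK N h m s = (\<Sum>q\<in>?C - {s}. xv q * TT N h q * (of_nat (fact ?c) * EE (?C - {s} - {q}) $ ?c))"
    unfolding PhiK_def
  proof (intro sum.cong refl)
    fix q assume q: "q \<in> ?C - {s}"
    have "JG N ?c {s, q} (\<lambda>_. 1) = of_nat (fact ?c) * EE (?C - {s, q}) $ ?c"
      by (rule JG_eval) (use s q in auto)
    moreover have "?C - {s, q} = ?C - {s} - {q}" by auto
    ultimately show "xv q * TT N h q * JG N ?c {s, q} (\<lambda>_. 1) = xv q * TT N h q * (of_nat (fact ?c) * EE (?C - {s} - {q}) $ ?c)"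
      by simp
  qed
  also have "\<dots> = of_nat (fact ?c) * (\<Sum>q\<in>?C - {s}. xv q * TT N h q * EE (?C - {s} - {q}) $ ?c)"
    by (simp add: sum_distrib_left algebra_simps)
  finally show ?thesis using e by simp
qed


lemma inner_eq:
  assumes m: "m \<ge> 2"
  shows "(\<Sum>s\<in>{1..N}. Wk N g p s * PhiK N h m s) = of_nat (fact (m - 2)) *
     ((\<Sum>z=1..m-1. of_nat z * EE {1..N} $ (m - 1 - z) * TT N (g + h + z) p)
      - of_nat (m - 2) * (\<Sum>z=1..m-1. LL N h z * TT N (m - 1 - z + g) p))"
proof -
  let ?C = "{1..N::nat}"
  have "(\<Sum>s\<in>?C. Wk N g p s * PhiK N h m s) = (\<Sum>s\<in>?C. Wk N g p s * (of_nat (fact (m - 2)) *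
     ((\<Sum>z=1..m-1. of_nat z * EE ?C $ (m - 1 - z) * TT N (h + z) s)
      - of_nat (m - 2) * (\<Sum>z=1..m-1. LL N h z * TT N (m - 1 - z) s))))"
    by (intro sum.cong refl) (simp add: PhiK_eq[OF _ m])
  also have "\<dots> = of_nat (fact (m - 2)) *
     ((\<Sum>z=1..m-1. of_nat z * EE ?C $ (m - 1 - z) * (\<Sum>s\<in>?C. Wk N g p s * TT N (h + z) s))
      - of_nat (m - 2) * (\<Sum>z=1..m-1. LL N h z * (\<Sum>s\<in>?C. Wk N g p s * TT N (m - 1 - z) s)))"
  proof -
    have x: "(\<Sum>s\<in>?C. Wk N g p s * (\<Sum>z=1..m-1. of_nat z * EE ?C $ (m - 1 - z) * TT N (h + z) s))
        = (\<Sum>z=1..m-1. of_nat z * EE ?C $ (m - 1 - z) * (\<Sum>s\<in>?C. Wk N g p s * TT N (h + z) s))"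
      by (simp add: sum_distrib_left mult_ac) (rule sum.swap)
    have y: "(\<Sum>s\<in>?C. Wk N g p s * (\<Sum>z=1..m-1. LL N h z * TT N (m - 1 - z) s))
        = (\<Sum>z=1..m-1. LL N h z * (\<Sum>s\<in>?C. Wk N g p s * TT N (m - 1 - z) s))"
      by (simp add: sum_distrib_left mult_ac) (rule sum.swap)
    have "(\<Sum>s\<in>?C. Wk N g p s * (of_nat (fact (m - 2)) *
     ((\<Sum>z=1..m-1. of_nat z * EE ?C $ (m - 1 - z) * TT N (h + z) s)
      - of_nat (m - 2) * (\<Sum>z=1..m-1. LL N h z * TT N (m - 1 - z) s))))
      = of_nat (fact (m - 2)) * ((\<Sum>s\<in>?C. Wk N g p s * (\<Sum>z=1..m-1. of_nat z * EE ?C $ (m - 1 - z) * TT N (h + z) s))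
         - of_nat (m - 2) * (\<Sum>s\<in>?C. Wk N g p s * (\<Sum>z=1..m-1. LL N h z * TT N (m - 1 - z) s)))"
      by (simp add: sum_distrib_left sum_subtractf algebra_simps)
    then show ?thesis unfolding x y .
  qed
  also have "\<dots> = of_nat (fact (m - 2)) *
     ((\<Sum>z=1..m-1. of_nat z * EE ?C $ (m - 1 - z) * TT N (g + h + z) p)
      - of_nat (m - 2) * (\<Sum>z=1..m-1. LL N h z * TT N (m - 1 - z + g) p))"
  proof -
    have "(\<Sum>s\<in>?C. Wk N g p s * TT N (h + z) s) = TT N (g + h + z) p" for z
      using TT_concat[of N g "h + z" p] by (simp add: add.assoc)
    moreover have "(\<Sum>s\<in>?C. Wk N g p s * TT N (m - 1 - z) s) = TT N (m - 1 - z + g) p" for z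
      using TT_concat[of N g "m - 1 - z" p] by (simp add: add.commute)
    ultimately show ?thesis by simp
  qed
  finally show ?thesis .
qed

lemma PK_eq:
  fixes V :: "'a set"
  assumes fin: "finite V" and r: "r \<in> V" and sym: "\<And>u v. E u v \<Longrightarrow> E v u" and m: "m \<ge> 2"
  shows "(\<Sum>\<kappa>\<in>pcS N (snd (Kgh (V,E) r m g h)) (fst (Kgh (V,E) r m g h)). wt (fst (Kgh (V,E) r m g h)) \<kappa>)
     = of_nat (fact (m - 2)) *
     ((\<Sum>z=1..m-1. of_nat z * EE {1..N} $ (m - 1 - z) * (\<Sum>\<kappa>\<in>pcS N E V. wt V \<kappa> * TT N (g + h + z) (\<kappa> r)))
      - of_nat (m - 2) * (\<Sum>z=1..m-1. LL N h z * (\<Sum>\<kappa>\<in>pcS N E V. wt V \<kappa> * TT N (m - 1 - z + g) (\<kappa> r))))"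
proof -
  have "(\<Sum>\<kappa>\<in>pcS N (snd (Kgh (V,E) r m g h)) (fst (Kgh (V,E) r m g h)). wt (fst (Kgh (V,E) r m g h)) \<kappa>)
     = (\<Sum>\<kappa>\<in>pcS N E V. wt V \<kappa> * (of_nat (fact (m - 2)) *
     ((\<Sum>z=1..m-1. of_nat z * EE {1..N} $ (m - 1 - z) * TT N (g + h + z) (\<kappa> r))
      - of_nat (m - 2) * (\<Sum>z=1..m-1. LL N h z * TT N (m - 1 - z + g) (\<kappa> r)))))"
  proof -
    have k: "(\<Sum>\<kappa>\<in>pcS N (snd (Kgh (V,E) r m g h)) (fst (Kgh (V,E) r m g h)). wt (fst (Kgh (V,E) r m g h)) \<kappa>)
       = (\<Sum>\<kappa>\<in>pcS N E V. wt V \<kappa> * (\<Sum>s\<in>{1..N}. Wk N g (\<kappa> r) s * PhiK N h m s))"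
      by (rule Kgh_P[where E=E, OF fin r sym m])
    show ?thesis unfolding k by (rule sum.cong[OF refl], subst inner_eq[OF m], rule refl)
  qed
  also have "\<dots> = of_nat (fact (m - 2)) *
     ((\<Sum>z=1..m-1. of_nat z * EE {1..N} $ (m - 1 - z) * (\<Sum>\<kappa>\<in>pcS N E V. wt V \<kappa> * TT N (g + h + z) (\<kappa> r)))
      - of_nat (m - 2) * (\<Sum>z=1..m-1. LL N h z * (\<Sum>\<kappa>\<in>pcS N E V. wt V \<kappa> * TT N (m - 1 - z + g) (\<kappa> r))))"
  proof -
    have x: "(\<Sum>\<kappa>\<in>pcS N E V. wt V \<kappa> * (\<Sum>z=1..m-1. of_nat z * EE {1..N} $ (m - 1 - z) * TT N (g + h + z) (\<kappa> r)))
       = (\<Sum>z=1..m-1. of_nat z * EE {1..N} $ (m - 1 - z) * (\<Sum>\<kappa>\<in>pcS N E V. wt V \<kappa> * TT N (g + h + z) (\<kappa> r)))"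
      by (simp add: sum_distrib_left mult_ac) (rule sum.swap)
    have y: "(\<Sum>\<kappa>\<in>pcS N E V. wt V \<kappa> * (\<Sum>z=1..m-1. LL N h z * TT N (m - 1 - z + g) (\<kappa> r)))
       = (\<Sum>z=1..m-1. LL N h z * (\<Sum>\<kappa>\<in>pcS N E V. wt V \<kappa> * TT N (m - 1 - z + g) (\<kappa> r)))"
      by (simp add: sum_distrib_left mult_ac) (rule sum.swap)
    have "(\<Sum>\<kappa>\<in>pcS N E V. wt V \<kappa> * (of_nat (fact (m - 2)) *
     ((\<Sum>z=1..m-1. of_nat z * EE {1..N} $ (m - 1 - z) * TT N (g + h + z) (\<kappa> r))
      - of_nat (m - 2) * (\<Sum>z=1..m-1. LL N h z * TT N (m - 1 - z + g) (\<kappa> r)))))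
      = of_nat (fact (m - 2)) * ((\<Sum>\<kappa>\<in>pcS N E V. wt V \<kappa> * (\<Sum>z=1..m-1. of_nat z * EE {1..N} $ (m - 1 - z) * TT N (g + h + z) (\<kappa> r)))
        - of_nat (m - 2) * (\<Sum>\<kappa>\<in>pcS N E V. wt V \<kappa> * (\<Sum>z=1..m-1. LL N h z * TT N (m - 1 - z + g) (\<kappa> r))))"
      by (simp add: sum_distrib_left sum_subtractf algebra_simps)
    then show ?thesis unfolding x y .
  qed
  finally show ?thesis .
qed


lemma csf_pair: "csf G \<alpha> = csf (fst G, snd G) \<alpha>" by simp

lemma finite_Kgh: "finite V \<Longrightarrow> finite (fst (Kgh (V,E) r m g h))"
proof -
  assume fin: "finite V"
  have "{Inr (1, j) | j. 1 \<le> j \<and> j < m} = (\<lambda>j. Inr (1, j)) ` {1..<m}" by auto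
  then have "finite (Kgh_clique r g m)" by (simp add: Kgh_clique_def)
  then show ?thesis using fin by (simp add: Kgh_def mk_graph_def)
qed

lemma finite_tailed: "finite V \<Longrightarrow> finite (fst (tailed (V,E) r k))"
  by (simp add: tailed_def mk_graph_def)

lemma finite_lollipop: "finite (fst (lollipop z h))"
  by (simp add: lollipop_def mk_graph_def)

lemma LL_lollipop:
  assumes "z \<ge> 1"
  shows "(\<Sum>\<kappa>\<in>pcS N (snd (lollipop z h)) (fst (lollipop z h)). wt (fst (lollipop z h)) \<kappa>)
    = of_nat (fact (z - 1)) * LL N h z"
proof -
  have "(\<Sum>\<kappa>\<in>pcS N (snd (lollipop z h)) (fst (lollipop z h)). wt (fst (lollipop z h)) \<kappa>)
     = (\<Sum>q\<in>{1..N}. xv q * TT N h q * JG N (z - 1) {q} (\<lambda>_. 1))" by (rule lollipop_P[OF assms])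
  also have "\<dots> = (\<Sum>q\<in>{1..N}. xv q * TT N h q * (of_nat (fact (z - 1)) * EE ({1..N} - {q}) $ (z - 1)))"
    by (intro sum.cong refl) (subst JG_eval, auto)
  also have "\<dots> = of_nat (fact (z - 1)) * LL N h z"
    unfolding LL_def by (simp add: sum_distrib_left mult_ac)
  finally show ?thesis .
qed

theorem theorem5p2:
  fixes V :: "'a set" and E :: "'a \<Rightarrow> 'a \<Rightarrow> bool" and r :: 'a
    and g h m :: nat
  assumes "finite V" and "r \<in> V"
    and "\<And>u v. E u v \<Longrightarrow> E v u" and "\<And>v. \<not> E v v"
    and "m \<ge> 2"
  shows "csf (Kgh (V, E) r m g h) \<alpha> / of_nat (fact (m - 2)) =
     (\<Sum>z=1..m-1. of_nat z * sf_mult (elem_sf (m - 1 - z)) (csf (tailed (V, E) r (g + h + z))) \<alpha>)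
     - of_nat (m - 2) *
       (\<Sum>z=1..m-1. sf_mult (csf (lollipop z h)) (csf (tailed (V, E) r (m - 1 - z + g))) \<alpha>
                      / of_nat (fact (z - 1)))"
proof -
  note fin = assms(1) and r = assms(2) and sym = assms(3) and m = assms(5)
  define N where "N = Max (insert 0 (Poly_Mapping.keys \<alpha>))"
  have keys: "\<forall>i\<in>Poly_Mapping.keys \<alpha>. i \<le> N" unfolding N_def by simp
  have keysb: "\<forall>i\<in>Poly_Mapping.keys \<beta>. i \<le> N" if "Poly_Mapping.keys \<beta> \<subseteq> Poly_Mapping.keys \<alpha>" for \<beta>
    using keys that by blast
  define PT where "PT k = (\<Sum>\<kappa>\<in>pcS N E V. wt V \<kappa> * TT N k (\<kappa> r))" for k
  have cT: "csf (tailed (V, E) r k) \<beta> = Poly_Mapping.lookup (PT k) \<beta>" if "Poly_Mapping.keys \<beta> \<subseteq> Poly_Mapping.keys \<alpha>" for k \<beta>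
    unfolding csf_pair[of "tailed (V, E) r k"] PT_def
    by (subst bridge[OF finite_tailed[OF fin] keysb[OF that]]) (simp add: tailed_P[where E=E, OF fin r sym])
  have cL: "csf (lollipop z h) \<beta> = Poly_Mapping.lookup (of_nat (fact (z - 1)) * LL N h z) \<beta>"
    if "Poly_Mapping.keys \<beta> \<subseteq> Poly_Mapping.keys \<alpha>" "z \<ge> 1" for z \<beta>
    unfolding csf_pair[of "lollipop z h"]
    by (subst bridge[OF finite_lollipop keysb[OF that(1)]]) (simp add: LL_lollipop[OF that(2)])
  have cE: "elem_sf k \<beta> = Poly_Mapping.lookup (EE {1..N} $ k) \<beta>" if "Poly_Mapping.keys \<beta> \<subseteq> Poly_Mapping.keys \<alpha>" for k \<beta>
    using elem_bridge[OF keysb[OF that]] by simp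
  have m1: "sf_mult (elem_sf k) (csf (tailed (V, E) r j)) \<alpha> = Poly_Mapping.lookup (EE {1..N} $ k * PT j) \<alpha>" for k j
  proof -
    have "sf_mult (elem_sf k) (csf (tailed (V, E) r j)) \<alpha>
        = sf_mult (Poly_Mapping.lookup (EE {1..N} $ k)) (Poly_Mapping.lookup (PT j)) \<alpha>"
      by (rule sf_mult_cong) (use keys_le cE cT in blast)
    then show ?thesis by (simp add: sf_mult_lookup)
  qed
  have m2: "sf_mult (csf (lollipop z h)) (csf (tailed (V, E) r j)) \<alpha> / of_nat (fact (z - 1))
      = Poly_Mapping.lookup (LL N h z * PT j) \<alpha>" if "z \<ge> 1" for z j
  proof -
    have "sf_mult (csf (lollipop z h)) (csf (tailed (V, E) r j)) \<alpha>
        = sf_mult (Poly_Mapping.lookup (of_nat (fact (z - 1)) * LL N h z)) (Poly_Mapping.lookup (PT j)) \<alpha>"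
      by (rule sf_mult_cong) (use keys_le cL[OF _ that] cT in blast)
    also have "\<dots> = of_nat (fact (z - 1)) * Poly_Mapping.lookup (LL N h z * PT j) \<alpha>"
      by (simp only: sf_mult_lookup mult.assoc lookup_of_nat_mult)
    finally show ?thesis by simp
  qed
  define BIG where "BIG = (\<Sum>z=1..m-1. of_nat z * EE {1..N} $ (m - 1 - z) * PT (g + h + z))
      - of_nat (m - 2) * (\<Sum>z=1..m-1. LL N h z * PT (m - 1 - z + g))"
  have cK: "csf (Kgh (V, E) r m g h) \<alpha> = Poly_Mapping.lookup (of_nat (fact (m - 2)) * BIG) \<alpha>"
    unfolding csf_pair[of "Kgh (V, E) r m g h"]
    by (subst bridge[OF finite_Kgh[OF fin] keys]) (simp add: PK_eq[where E=E, OF fin r sym m] BIG_def PT_def)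
  have LHS: "csf (Kgh (V, E) r m g h) \<alpha> / of_nat (fact (m - 2)) = Poly_Mapping.lookup BIG \<alpha>"
    unfolding cK lookup_of_nat_mult by simp
  have "Poly_Mapping.lookup BIG \<alpha> =
     (\<Sum>z=1..m-1. of_nat z * Poly_Mapping.lookup (EE {1..N} $ (m - 1 - z) * PT (g + h + z)) \<alpha>)
     - of_nat (m - 2) * (\<Sum>z=1..m-1. Poly_Mapping.lookup (LL N h z * PT (m - 1 - z + g)) \<alpha>)"
    unfolding BIG_def by (simp add: lookup_minus lookup_sum lookup_of_nat_mult mult.assoc)
  also have "\<dots> = (\<Sum>z=1..m-1. of_nat z * sf_mult (elem_sf (m - 1 - z)) (csf (tailed (V, E) r (g + h + z))) \<alpha>)
     - of_nat (m - 2) *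
       (\<Sum>z=1..m-1. sf_mult (csf (lollipop z h)) (csf (tailed (V, E) r (m - 1 - z + g))) \<alpha>
                      / of_nat (fact (z - 1)))"
  proof -
    have a: "(\<Sum>z=1..m-1. of_nat z * Poly_Mapping.lookup (EE {1..N} $ (m - 1 - z) * PT (g + h + z)) \<alpha>)
       = (\<Sum>z=1..m-1. of_nat z * sf_mult (elem_sf (m - 1 - z)) (csf (tailed (V, E) r (g + h + z))) \<alpha>)"
      by (rule sum.cong[OF refl]) (simp only: m1)
    have b: "(\<Sum>z=1..m-1. Poly_Mapping.lookup (LL N h z * PT (m - 1 - z + g)) \<alpha>)
       = (\<Sum>z=1..m-1. sf_mult (csf (lollipop z h)) (csf (tailed (V, E) r (m - 1 - z + g))) \<alpha>
                      / of_nat (fact (z - 1)))"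
      by (rule sum.cong[OF refl]) (rule m2[symmetric], simp)
    show ?thesis unfolding a b ..
  qed
  finally show ?thesis using LHS by simp
qed


end
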